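(* Let $G=(V,E,w)$, the partition $SG_1,\dots,SG_m$, the object set $O$ with $|O|>k$, the query $q=(v_q,k)$, and the D$k$NN protocol be as described in the context, and assume $G$ is connected and every edge weight satisfies $w(u,v)\ge \|\mathrm{pos}(u)-\mathrm{pos}(v)\|_2$. Consider any execution of the protocol (with arbitrary interleaving and delays of message processing, and with arbitrarily stale local bounds subject to the constraint in the context). If at some time the acknowledgment buffer $\mathcal{B}_q$ is empty, then the returned set $R(q)$ (the $k$ reported objects with smallest reported distances, ties broken arbitrarily) satisfies: $|R(q)|=k$, $R(q)\subseteq O$, and for all $o\in R(q)$ and all $o'\in O\setminus R(q)$, $SD(v_q,o)\le SD(v_q,o')$.
   Context: Road network: $G=(V,E,w)$ is a finite undirected graph with non-negative edge weights $w$; each vertex $v$ has a planar position $\mathrm{pos}(v)\in\mathbb{R}^2$. $SD(u,v)$ denotes the shortest-path distance in $G$. The vertex set is partitioned into subgraphs $SG_1,\dots,SG_m$; each $SG_p$ is the induced subgraph on its vertex set, and $d_p(a,b)$ is the shortest-path distance between $a,b$ inside $SG_p$ (using only edges with both endpoints in $SG_p$). A vertex of $SG_p$ is a border vertex if it has a neighbor in some $SG_{p'}$, $p'\ne p$; such edges are external edges. Each moving object $o\in O$ has a live vertex $v(o)\in V$ (the next vertex it travels toward) and a remaining cost $\delta(o)\ge 0$; define $SD(v_q,o)=SD(v_q,v(o))+\delta(o)$. For the query $q=(v_q,k)$, let $E(v_q,SG_p)$ be the minimum Euclidean distance from $\mathrm{pos}(v_q)$ to the positions of the border vertices of $SG_p$.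 D$k$NN protocol. Each subgraph $SG_p$ keeps a table $D_p(\cdot)$ (initially $+\infty$) over its own vertices and the outside neighbors of its border vertices, and a local bound $\varepsilon_p$. A query unit collects reported pairs $(o,\text{dist})$, keeping for each object its minimum reported distance $\mathrm{rep}(o)$; the global bound $\varepsilon(t)$ at time $t$ is the $k$-th smallest value of $\mathrm{rep}$ over distinct objects reported so far ($+\infty$ if fewer than $k$). The query starts by sending the message $(v_q,0)$ to the subgraph containing $v_q$. When $SG_p$ processes a message $(v_b,\text{dist})$ with $v_b\in SG_p$: if $\text{dist}>\varepsilon_p$ or $\text{dist}>D_p(v_b)$, it does nothing further; otherwise it sets $D_p(v_b)=\text{dist}$; for each live vertex $v_i\in SG_p$ with $\text{dist}+d_p(v_b,v_i)\le D_p(v_i)$ it sets $D_p(v_i)=\text{dist}+d_p(v_b,v_i)$ and reports to the query unit every object $o$ with $v(o)=v_i$ and $D_p(v_i)+\delta(o)<\varepsilon_p$, with distance $D_p(v_i)+\delta(o)$; for each border vertex $v_j\in SG_p$ and each neighbor $v'\notin SG_p$ of $v_j$ with $\text{dist}+d_p(v_b,v_j)+w(v_j,v')\le D_p(v')$, it sets $D_p(v')$ to that value and sends the message $(v',D_p(v'))$ to the subgraph containing $v'$. Bounds: at every time $t$, each non-pruned subgraph uses a local bound $\varepsilon_p(t)\ge\varepsilon(t)$ (staleness allowed). Pruning: if at some time $t$ a subgraph $SG_p$ not containing $v_q$ satisfies $E(v_q,SG_p)>\varepsilon(t)$, it may be pruned, after which $\varepsilon_p=0$ (it discards all further messages). Acknowledgments: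 whenever a message is sent from $SG_p$ to $SG_{p'}$, a token is inserted into the buffer $\mathcal{B}_q$; the token is removed when $SG_{p'}$ has finished processing that message (including dispatching all messages it generates, whose tokens are inserted before removal). The initial message also carries a token. *)

theory Defs
  imports "HOL-Analysis.Analysis" "HOL-Library.Multiset"
begin

text \<open>Static data of one D-kNN query instance: the road network G = (V,E,w) with planar
positions, the partition into subgraphs (given by an index function part: vertex v
belongs to SG_(part v)), the moving objects O with live vertex and remaining cost,
and the query q = (v_q, k).\<close>

record ('v, 'p, 'o) dknn_inst =
  Vs    :: "'v set"
  Es    :: "('v \<times> 'v) set"
  wt    :: "'v \<Rightarrow> 'v \<Rightarrow> real"
  vpos  :: "'v \<Rightarrow> real^2"
  part  :: "'v \<Rightarrow> 'p"
  Obj   :: "'o set"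
  vloc  :: "'o \<Rightarrow> 'v"
  rem   :: "'o \<Rightarrow> real"
  vq    :: "'v"
  kq    :: nat

fun is_walk :: "('v \<times> 'v) set \<Rightarrow> 'v list \<Rightarrow> bool" where
  "is_walk E [] = False"
| "is_walk E [x] = True"
| "is_walk E (x # y # xs) = ((x, y) \<in> E \<and> is_walk E (y # xs))"

fun walk_len :: "('v \<Rightarrow> 'v \<Rightarrow> real) \<Rightarrow> 'v list \<Rightarrow> real" where
  "walk_len w (x # y # xs) = w x y + walk_len w (y # xs)"
| "walk_len w _ = 0"

definition sp_dist :: "('v \<times> 'v) set \<Rightarrow> ('v \<Rightarrow> 'v \<Rightarrow> real) \<Rightarrow> 'v set \<Rightarrow> 'v \<Rightarrow> 'v \<Rightarrow> ereal" where
  "sp_dist E w S a b =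
     Inf {ereal (walk_len w xs) | xs. is_walk E xs \<and> hd xs = a \<and> last xs = b \<and> set xs \<subseteq> S}"

definition SD :: "('v, 'p, 'o) dknn_inst \<Rightarrow> 'v \<Rightarrow> 'v \<Rightarrow> ereal" where
  "SD N a b = sp_dist (Es N) (wt N) (Vs N) a b"

definition SD_obj :: "('v, 'p, 'o) dknn_inst \<Rightarrow> 'o \<Rightarrow> ereal" where
  "SD_obj N ob = SD N (vq N) (vloc N ob) + ereal (rem N ob)"

definition SG :: "('v, 'p, 'o) dknn_inst \<Rightarrow> 'p \<Rightarrow> 'v set" where
  "SG N p = {v \<in> Vs N. part N v = p}"

definition dsub :: "('v, 'p, 'o) dknn_inst \<Rightarrow> 'p \<Rightarrow> 'v \<Rightarrow> 'v \<Rightarrow> ereal" where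
  "dsub N p a b = sp_dist (Es N) (wt N) (SG N p) a b"

definition is_border :: "('v, 'p, 'o) dknn_inst \<Rightarrow> 'p \<Rightarrow> 'v \<Rightarrow> bool" where
  "is_border N p v \<longleftrightarrow> v \<in> SG N p \<and> (\<exists>u. (v, u) \<in> Es N \<and> u \<in> Vs N \<and> part N u \<noteq> p)"

definition live_set :: "('v, 'p, 'o) dknn_inst \<Rightarrow> 'p \<Rightarrow> 'v set" where
  "live_set N p = {v \<in> SG N p. \<exists>ob \<in> Obj N. vloc N ob = v}"

definition ext_edges :: "('v, 'p, 'o) dknn_inst \<Rightarrow> 'p \<Rightarrow> ('v \<times> 'v) set" where
  "ext_edges N p = {(vj, v'). is_border N p vj \<and> (vj, v') \<in> Es N \<and> v' \<in> Vs N \<and> part N v' \<noteq> p}"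

definition Edist :: "('v, 'p, 'o) dknn_inst \<Rightarrow> 'p \<Rightarrow> ereal" where
  "Edist N p = Inf {ereal (norm (vpos N (vq N) - vpos N b)) | b. is_border N p b}"

text \<open>Dt p = the table D_p; leps p = local bound epsilon_p; pruned = pruned subgraphs;
reps = all pairs (ob, dist) reported to the query unit so far; inbox = messages
(target vertex, dist) that were sent and whose processing has not started (each carries a
token in the buffer B_q); active p = the message SG_p is currently processing (its token
is still in B_q) together with the live vertices and external edges not yet handled.\<close>

record ('v, 'p, 'o) dstate =
  Dt     :: "'p \<Rightarrow> 'v \<Rightarrow> ereal"
  leps   :: "'p \<Rightarrow> ereal"
  pruned :: "'p set"
  reps   :: "('o \<times> ereal) set"
  inbox  :: "('v \<times> ereal) multiset"
  active :: "'p \<Rightarrow> (('v \<times> ereal) \<times> 'v set \<times> ('v \<times> 'v) set) option"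

definition init_state :: "('v, 'p, 'o) dknn_inst \<Rightarrow> ('v, 'p, 'o) dstate" where
  "init_state N = \<lparr> Dt = (\<lambda>_ _. \<infinity>), leps = (\<lambda>_. \<infinity>), pruned = {}, reps = {},
                    inbox = {#(vq N, 0)#}, active = (\<lambda>_. None) \<rparr>"

definition rep_objs :: "('v, 'p, 'o) dstate \<Rightarrow> 'o set" where
  "rep_objs s = fst ` reps s"

definition rep :: "('v, 'p, 'o) dstate \<Rightarrow> 'o \<Rightarrow> ereal" where
  "rep s ob = Inf {d. (ob, d) \<in> reps s}"

definition geps :: "('v, 'p, 'o) dknn_inst \<Rightarrow> ('v, 'p, 'o) dstate \<Rightarrow> ereal" where
  "geps N s = (if card (rep_objs s) < kq N then \<infinity>
               else sorted_list_of_multiset (image_mset (rep s) (mset_set (rep_objs s))) ! (kq N - 1))"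

definition buffer_empty :: "('v, 'p, 'o) dstate \<Rightarrow> bool" where
  "buffer_empty s \<longleftrightarrow> inbox s = {#} \<and> (\<forall>p. active s p = None)"

text \<open>Each subgraph processes its messages one at a time, but the processing of a message is
split into fine-grained steps (one per live vertex / per external edge, in arbitrary order)
which interleave arbitrarily with the steps of other subgraphs, with message delivery order,
with (stale) updates of local bounds, and with pruning.\<close>

inductive dstep :: "('v, 'p, 'o) dknn_inst \<Rightarrow> ('v, 'p, 'o) dstate \<Rightarrow> ('v, 'p, 'o) dstate \<Rightarrow> bool"
  for N where
  discard:
  "\<lbrakk> (vb, d) \<in># inbox s; p = part N vb; active s p = None;
     p \<in> pruned s \<or> d > leps s p \<or> d > Dt s p vb \<rbrakk>
   \<Longrightarrow> dstep N s (s\<lparr> inbox := inbox s - {#(vb, d)#} \<rparr>)"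
| start:
  "\<lbrakk> (vb, d) \<in># inbox s; p = part N vb; active s p = None;
     p \<notin> pruned s; d \<le> leps s p; d \<le> Dt s p vb \<rbrakk>
   \<Longrightarrow> dstep N s (s\<lparr> inbox := inbox s - {#(vb, d)#},
                      Dt := (Dt s)(p := (Dt s p)(vb := d)),
                      active := (active s)(p := Some ((vb, d), live_set N p, ext_edges N p)) \<rparr>)"
| live_upd:
  "\<lbrakk> active s p = Some ((vb, d), L, B); vi \<in> L; c = d + dsub N p vb vi; c \<le> Dt s p vi \<rbrakk>
   \<Longrightarrow> dstep N s (s\<lparr> Dt := (Dt s)(p := (Dt s p)(vi := c)),
                      reps := reps s \<union> {(ob, c + ereal (rem N ob)) | ob.
                                ob \<in> Obj N \<and> vloc N ob = vi \<and> c + ereal (rem N ob) < leps s p},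
                      active := (active s)(p := Some ((vb, d), L - {vi}, B)) \<rparr>)"
| live_skip:
  "\<lbrakk> active s p = Some ((vb, d), L, B); vi \<in> L; \<not> d + dsub N p vb vi \<le> Dt s p vi \<rbrakk>
   \<Longrightarrow> dstep N s (s\<lparr> active := (active s)(p := Some ((vb, d), L - {vi}, B)) \<rparr>)"
| ext_upd:
  "\<lbrakk> active s p = Some ((vb, d), L, B); (vj, v') \<in> B;
     c = d + dsub N p vb vj + ereal (wt N vj v'); c \<le> Dt s p v' \<rbrakk>
   \<Longrightarrow> dstep N s (s\<lparr> Dt := (Dt s)(p := (Dt s p)(v' := c)),
                      inbox := inbox s + {#(v', c)#},
                      active := (active s)(p := Some ((vb, d), L, B - {(vj, v')})) \<rparr>)"
| ext_skip:
  "\<lbrakk> active s p = Some ((vb, d), L, B); (vj, v') \<in> B;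
     \<not> d + dsub N p vb vj + ereal (wt N vj v') \<le> Dt s p v' \<rbrakk>
   \<Longrightarrow> dstep N s (s\<lparr> active := (active s)(p := Some ((vb, d), L, B - {(vj, v')})) \<rparr>)"
| finish:
  "active s p = Some (m, {}, {}) \<Longrightarrow> dstep N s (s\<lparr> active := (active s)(p := None) \<rparr>)"
| bound:
  "\<lbrakk> p \<notin> pruned s; e \<ge> geps N s \<rbrakk> \<Longrightarrow> dstep N s (s\<lparr> leps := (leps s)(p := e) \<rparr>)"
| prune:
  "\<lbrakk> p \<noteq> part N (vq N); Edist N p > geps N s \<rbrakk>
   \<Longrightarrow> dstep N s (s\<lparr> pruned := insert p (pruned s), leps := (leps s)(p := 0) \<rparr>)"

definition reachable :: "('v, 'p, 'o) dknn_inst \<Rightarrow> ('v, 'p, 'o) dstate \<Rightarrow> bool" where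
  "reachable N s \<longleftrightarrow> (dstep N)\<^sup>*\<^sup>* (init_state N) s"

definition is_result :: "('v, 'p, 'o) dknn_inst \<Rightarrow> ('v, 'p, 'o) dstate \<Rightarrow> 'o set \<Rightarrow> bool" where
  "is_result N s R \<longleftrightarrow> R \<subseteq> rep_objs s \<and> card R = min (kq N) (card (rep_objs s))
      \<and> (\<forall>ob \<in> R. \<forall>o' \<in> rep_objs s - R. rep s ob \<le> rep s o')"

definition wf_inst :: "('v, 'p, 'o) dknn_inst \<Rightarrow> bool" where
  "wf_inst N \<longleftrightarrow>
     finite (Vs N) \<and> Es N \<subseteq> Vs N \<times> Vs N \<and>
     (\<forall>u v. (u, v) \<in> Es N \<longrightarrow> (v, u) \<in> Es N \<and> wt N u v = wt N v u \<and> wt N u v \<ge> 0) \<and>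
     finite (Obj N) \<and> (\<forall>ob \<in> Obj N. vloc N ob \<in> Vs N \<and> rem N ob \<ge> 0) \<and>
     vq N \<in> Vs N"

definition connected_graph :: "('v, 'p, 'o) dknn_inst \<Rightarrow> bool" where
  "connected_graph N \<longleftrightarrow> (\<forall>a \<in> Vs N. \<forall>b \<in> Vs N.
      \<exists>xs. is_walk (Es N) xs \<and> hd xs = a \<and> last xs = b \<and> set xs \<subseteq> Vs N)"

end

theory Submission
  imports Defs
begin

lemma Inf_add_le:
  fixes A B :: "ereal set"
  assumes "\<forall>a\<in>A. 0 \<le> a" "\<forall>b\<in>B. 0 \<le> b" "\<forall>a\<in>A. \<forall>b\<in>B. z \<le> a + b"
  shows "z \<le> Inf A + Inf B"
proof (cases "A = {} \<or> B = {}")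
  case True
  have "0 \<le> Inf A" "0 \<le> Inf B" using assms by (auto intro: Inf_greatest)
  then show ?thesis using True by (auto simp: top_ereal_def)
next
  case False
  have iB: "0 \<le> Inf B" using assms by (auto intro: Inf_greatest)
  have "Inf A + Inf B = (INF a\<in>A. a + Inf B)"
    using INF_ereal_add_left[of A "Inf B" "\<lambda>x. x"] False iB assms by auto
  also have "\<dots> = (INF a\<in>A. (INF b\<in>B. a + b))"
  proof (rule INF_cong[OF refl])
    fix a assume "a \<in> A"
    then show "a + Inf B = (INF b\<in>B. a + b)"
      using INF_ereal_add_right[of B a "\<lambda>x. x"] False assms by auto
  qed
  finally show ?thesis using assms by (auto intro!: INF_greatest)
qed

lemma is_walk_snoc:
  "xs \<noteq> [] \<Longrightarrow> is_walk E (xs @ [y]) \<longleftrightarrow> is_walk E xs \<and> (last xs, y) \<in> E"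
  by (induction xs rule: is_walk.induct) auto

lemma walk_len_snoc:
  "xs \<noteq> [] \<Longrightarrow> walk_len w (xs @ [y]) = walk_len w xs + w (last xs) y"
  by (induction w xs rule: walk_len.induct) auto

lemma is_walk_append:
  "is_walk E xs \<Longrightarrow> is_walk E ys \<Longrightarrow> last xs = hd ys \<Longrightarrow> is_walk E (xs @ tl ys)"
  by (induction xs rule: is_walk.induct) (auto simp: neq_Nil_conv elim: is_walk.elims)

lemma walk_len_append:
  "xs \<noteq> [] \<Longrightarrow> ys \<noteq> [] \<Longrightarrow> last xs = hd ys \<Longrightarrow> walk_len w (xs @ tl ys) = walk_len w xs + walk_len w ys"
proof (induction w xs rule: walk_len.induct)
  case (1 w x y xs) then show ?case by auto
next
  case ("2_1" w) then show ?case by auto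
next
  case ("2_2" w x) then show ?case by (cases ys rule: remdups_adj.cases) auto
qed

lemma walk_len_nonneg:
  "is_walk E xs \<Longrightarrow> (\<forall>u v. (u,v) \<in> E \<longrightarrow> 0 \<le> w u v) \<Longrightarrow> 0 \<le> walk_len w xs"
  by (induction w xs rule: walk_len.induct) (auto elim: is_walk.elims)

lemma walk_euclid:
  assumes "is_walk E xs" "\<forall>u v. (u,v) \<in> E \<longrightarrow> w u v \<ge> norm (pos u - pos v)"
  shows "norm (pos (hd xs) - pos (last xs)) \<le> walk_len w xs"
  using assms
proof (induction w xs rule: walk_len.induct)
  case (1 w x y xs)
  have "norm (pos x - pos (last (y # xs))) \<le> norm (pos x - pos y) + norm (pos y - pos (last (y#xs)))"
    by (rule norm_diff_triangle_le[OF order_refl order_refl])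
  moreover have "norm (pos x - pos y) \<le> w x y" using 1 by auto
  moreover have "norm (pos y - pos (last (y#xs))) \<le> walk_len w (y # xs)" using 1 by auto
  ultimately show ?case by simp
qed auto


lemma sp_le_walk:
  "is_walk E xs \<Longrightarrow> hd xs = a \<Longrightarrow> last xs = b \<Longrightarrow> set xs \<subseteq> S \<Longrightarrow>
   sp_dist E w S a b \<le> ereal (walk_len w xs)"
  unfolding sp_dist_def by (rule Inf_lower) blast

lemma sp_nonneg:
  "\<forall>u v. (u,v) \<in> E \<longrightarrow> 0 \<le> w u v \<Longrightarrow> 0 \<le> sp_dist E w S a b"
  unfolding sp_dist_def by (rule Inf_greatest) (auto intro: walk_len_nonneg)

lemma sp_refl: "a \<in> S \<Longrightarrow> sp_dist E w S a a \<le> 0"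
  using sp_le_walk[of E "[a]" a a S w] by (simp add: zero_ereal_def)

lemma sp_edge: "(b,c) \<in> E \<Longrightarrow> b \<in> S \<Longrightarrow> c \<in> S \<Longrightarrow> sp_dist E w S b c \<le> ereal (w b c)"
  using sp_le_walk[of E "[b,c]" b c S w] by simp

lemma sp_tri:
  assumes NN: "\<forall>u v. (u,v) \<in> E \<longrightarrow> 0 \<le> w u v" and sub: "S' \<subseteq> S"
  shows "sp_dist E w S a c \<le> sp_dist E w S a b + sp_dist E w S' b c"
  unfolding sp_dist_def
proof (rule Inf_add_le)
  show "\<forall>x\<in>{ereal (walk_len w xs) |xs. is_walk E xs \<and> hd xs = a \<and> last xs = b \<and> set xs \<subseteq> S}. 0 \<le> x"
    using NN by (auto intro: walk_len_nonneg)
  show "\<forall>x\<in>{ereal (walk_len w xs) |xs. is_walk E xs \<and> hd xs = b \<and> last xs = c \<and> set xs \<subseteq> S'}. 0 \<le> x"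
    using NN by (auto intro: walk_len_nonneg)
  show "\<forall>x\<in>{ereal (walk_len w xs) |xs. is_walk E xs \<and> hd xs = a \<and> last xs = b \<and> set xs \<subseteq> S}.
        \<forall>y\<in>{ereal (walk_len w xs) |xs. is_walk E xs \<and> hd xs = b \<and> last xs = c \<and> set xs \<subseteq> S'}.
        Inf {ereal (walk_len w xs) |xs. is_walk E xs \<and> hd xs = a \<and> last xs = c \<and> set xs \<subseteq> S} \<le> x + y"
  proof (intro ballI)
    fix x y
    assume "x \<in> {ereal (walk_len w xs) |xs. is_walk E xs \<and> hd xs = a \<and> last xs = b \<and> set xs \<subseteq> S}"
    then obtain xs where xs: "x = walk_len w xs" "is_walk E xs" "hd xs = a" "last xs = b" "set xs \<subseteq> S" by blast
    assume "y \<in> {ereal (walk_len w xs) |xs. is_walk E xs \<and> hd xs = b \<and> last xs = c \<and> set xs \<subseteq> S'}"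
    then obtain ys where ys: "y = walk_len w ys" "is_walk E ys" "hd ys = b" "last ys = c" "set ys \<subseteq> S'" by blast
    have ne: "xs \<noteq> []" "ys \<noteq> []" using xs ys by auto
    have w1: "is_walk E (xs @ tl ys)" using is_walk_append[of E xs ys] xs ys by simp
    have w2: "walk_len w (xs @ tl ys) = walk_len w xs + walk_len w ys"
      using walk_len_append[of xs ys w] ne xs ys by simp
    have h: "hd (xs @ tl ys) = a" using xs ne by simp
    have l: "last (xs @ tl ys) = c"
    proof (cases "tl ys = []")
      case True
      then have "ys = [hd ys]" using ne by (cases ys) auto
      then show ?thesis using True xs ys by (metis append_Nil2 last_ConsL)
    next
      case False
      then show ?thesis using ys ne by (cases ys) auto
    qed
    have st: "set (xs @ tl ys) \<subseteq> S" using xs ys sub ne by (cases ys) auto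
    have "Inf {ereal (walk_len w xs) |xs. is_walk E xs \<and> hd xs = a \<and> last xs = c \<and> set xs \<subseteq> S}
          \<le> ereal (walk_len w (xs @ tl ys))"
      by (rule Inf_lower) (use w1 h l st in blast)
    then show "Inf {ereal (walk_len w xs) |xs. is_walk E xs \<and> hd xs = a \<and> last xs = c \<and> set xs \<subseteq> S} \<le> x + y"
      using w2 xs ys by simp
  qed
qed

lemma sp_tri_edge:
  assumes NN: "\<forall>u v. (u,v) \<in> E \<longrightarrow> 0 \<le> w u v" and "(b,c) \<in> E" "b \<in> S" "c \<in> S"
  shows "sp_dist E w S a c \<le> sp_dist E w S a b + ereal (w b c)"
proof -
  have "sp_dist E w S a c \<le> sp_dist E w S a b + sp_dist E w S b c"
    by (rule sp_tri[OF NN order_refl])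
  also have "\<dots> \<le> sp_dist E w S a b + ereal (w b c)"
    using sp_edge[OF assms(2-4)] by (intro add_left_mono)
  finally show ?thesis .
qed

lemma sorted_kth:
  fixes xs :: "'a::linorder list"
  assumes "sorted xs" "1 \<le> k" "k \<le> length xs"
  shows "xs ! (k - 1) \<le> x \<longleftrightarrow> k \<le> length (filter (\<lambda>y. y \<le> x) xs)"
proof
  assume h: "xs ! (k - 1) \<le> x"
  have "\<forall>y\<in>set (take k xs). y \<le> x"
  proof
    fix y assume "y \<in> set (take k xs)"
    then obtain i where i: "i < length (take k xs)" "y = take k xs ! i" by (metis in_set_conv_nth)
    then have "i \<le> k - 1" "k - 1 < length xs" using assms by auto
    then have "xs ! i \<le> xs ! (k - 1)" using assms(1) by (simp add: sorted_nth_mono)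
    then show "y \<le> x" using i h by simp
  qed
  then have "filter (\<lambda>y. y \<le> x) (take k xs) = take k xs" by simp
  then have "k = length (filter (\<lambda>y. y \<le> x) (take k xs))" using assms by simp
  also have "\<dots> \<le> length (filter (\<lambda>y. y \<le> x) (take k xs @ drop k xs))"
    by (simp only: filter_append length_append)
  finally show "k \<le> length (filter (\<lambda>y. y \<le> x) xs)" by simp
next
  assume h: "k \<le> length (filter (\<lambda>y. y \<le> x) xs)"
  show "xs ! (k - 1) \<le> x"
  proof (rule ccontr)
    assume "\<not> xs ! (k - 1) \<le> x"
    then have gx: "x < xs ! (k - 1)" by simp
    have "\<forall>y\<in>set (drop (k - 1) xs). \<not> y \<le> x"
    proof
      fix y assume "y \<in> set (drop (k - 1) xs)"
      then obtain i where i: "i < length (drop (k-1) xs)" "y = drop (k-1) xs ! i" by (metis in_set_conv_nth)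
      then have "y = xs ! (k - 1 + i)" "k - 1 + i < length xs" using assms by auto
      moreover have "xs ! (k - 1) \<le> xs ! (k - 1 + i)" using assms(1) calculation(2) by (simp add: sorted_nth_mono)
      ultimately show "\<not> y \<le> x" using gx by simp
    qed
    then have "filter (\<lambda>y. y \<le> x) (drop (k - 1) xs) = []" by (simp add: filter_empty_conv)
    then have "length (filter (\<lambda>y. y \<le> x) xs) = length (filter (\<lambda>y. y \<le> x) (take (k - 1) xs))"
      by (metis append_Nil2 append_take_drop_id filter_append)
    also have "\<dots> \<le> length (take (k - 1) xs)" by (rule length_filter_le)
    also have "\<dots> \<le> k - 1" by simp
    finally show False using h assms by simp
  qed
qed

lemma card_filter_sorted:
  fixes f :: "'a \<Rightarrow> 'b::linorder"
  assumes "finite A"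
  shows "card {a\<in>A. f a \<le> x} = length (filter (\<lambda>y. y \<le> x) (sorted_list_of_multiset (image_mset f (mset_set A))))"
proof -
  have "length (filter (\<lambda>y. y \<le> x) (sorted_list_of_multiset (image_mset f (mset_set A))))
      = size (filter_mset (\<lambda>y. y \<le> x) (image_mset f (mset_set A)))"
    by (metis mset_filter size_mset mset_sorted_list_of_multiset)
  also have "\<dots> = size (image_mset f (filter_mset (\<lambda>a. f a \<le> x) (mset_set A)))"
    by (simp add: filter_mset_image_mset)
  also have "\<dots> = card {a\<in>A. f a \<le> x}" using assms by simp
  finally show ?thesis by simp
qed

lemma geps_le_iff:
  assumes "finite (rep_objs s)" "1 \<le> kq N" "kq N \<le> card (rep_objs s)"
  shows "geps N s \<le> x \<longleftrightarrow> kq N \<le> card {ob\<in>rep_objs s. rep s ob \<le> x}"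
proof -
  let ?xs = "sorted_list_of_multiset (image_mset (rep s) (mset_set (rep_objs s)))"
  have len: "length ?xs = card (rep_objs s)"
    by (metis size_image_mset size_mset size_mset_set mset_sorted_list_of_multiset)
  have "geps N s = ?xs ! (kq N - 1)" using assms unfolding geps_def by simp
  then show ?thesis
    using sorted_kth[of ?xs "kq N" x] assms len card_filter_sorted[OF assms(1), of "rep s" x]
    by simp
qed

lemma geps_lower:
  assumes "finite (rep_objs s)" "1 \<le> kq N" "kq N \<le> card {ob\<in>rep_objs s. rep s ob \<le> x}"
  shows "geps N s \<le> x"
proof -
  have "card {ob\<in>rep_objs s. rep s ob \<le> x} \<le> card (rep_objs s)"
    using assms(1) by (intro card_mono) auto
  then show ?thesis using geps_le_iff[OF assms(1,2)] assms by simp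
qed

lemma geps_upper:
  assumes "finite (rep_objs s)" "1 \<le> kq N" "kq N \<le> card (rep_objs s)"
  shows "kq N \<le> card {ob\<in>rep_objs s. rep s ob \<le> geps N s}"
  using geps_le_iff[OF assms, of "geps N s"] by simp

lemma rep_mono: "reps s \<subseteq> reps s' \<Longrightarrow> rep s' ob \<le> rep s ob"
  unfolding rep_def by (rule Inf_superset_mono) auto

lemma geps_mono:
  assumes "reps s \<subseteq> reps s'" "finite (rep_objs s')" "1 \<le> kq N"
  shows "geps N s' \<le> geps N s"
proof (cases "card (rep_objs s) < kq N")
  case True then show ?thesis by (simp add: geps_def)
next
  case False
  have sub: "rep_objs s \<subseteq> rep_objs s'" using assms(1) unfolding rep_objs_def by auto
  then have fin: "finite (rep_objs s)" using assms(2) finite_subset by blast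
  have "kq N \<le> card {ob\<in>rep_objs s. rep s ob \<le> geps N s}"
    using geps_upper[OF fin assms(3)] False by simp
  also have "\<dots> \<le> card {ob\<in>rep_objs s'. rep s' ob \<le> geps N s}"
    using sub rep_mono[OF assms(1)] assms(2) by (intro card_mono) (auto intro: order_trans)
  finally show ?thesis by (rule geps_lower[OF assms(2,3)])
qed

lemma wf_nn: "wf_inst N \<Longrightarrow> \<forall>u v. (u,v) \<in> Es N \<longrightarrow> 0 \<le> wt N u v"
  unfolding wf_inst_def by blast

lemma SG_sub: "SG N p \<subseteq> Vs N" unfolding SG_def by auto

lemma SD_nonneg: "wf_inst N \<Longrightarrow> 0 \<le> SD N a b"
  unfolding SD_def by (rule sp_nonneg[OF wf_nn])

lemma dsub_nonneg: "wf_inst N \<Longrightarrow> 0 \<le> dsub N p a b"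
  unfolding dsub_def by (rule sp_nonneg[OF wf_nn])

lemma SD_tri_sub: "wf_inst N \<Longrightarrow> SD N a c \<le> SD N a b + dsub N p b c"
  unfolding SD_def dsub_def by (rule sp_tri[OF wf_nn SG_sub])

lemma SD_tri_edge: "wf_inst N \<Longrightarrow> (b,c) \<in> Es N \<Longrightarrow> b \<in> Vs N \<Longrightarrow> c \<in> Vs N \<Longrightarrow>
   SD N a c \<le> SD N a b + ereal (wt N b c)"
  unfolding SD_def by (rule sp_tri_edge[OF wf_nn])

lemma dsub_refl: "v \<in> SG N p \<Longrightarrow> dsub N p v v \<le> 0"
  unfolding dsub_def by (rule sp_refl)

lemma SD_refl: "v \<in> Vs N \<Longrightarrow> SD N v v \<le> 0"
  unfolding SD_def by (rule sp_refl)

lemma dsub_tri_edge: "wf_inst N \<Longrightarrow> (b,c) \<in> Es N \<Longrightarrow> b \<in> SG N p \<Longrightarrow> c \<in> SG N p \<Longrightarrow>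
   dsub N p a c \<le> dsub N p a b + ereal (wt N b c)"
  unfolding dsub_def by (rule sp_tri_edge[OF wf_nn])

lemma dsub_refl_add: "v \<in> SG N p \<Longrightarrow> d + dsub N p v v \<le> (d::ereal)"
  using add_left_mono[OF dsub_refl, of v N p d] by simp

definition entries :: "('v, 'p, 'o) dstate \<Rightarrow> ('p \<Rightarrow> ('v \<times> ereal) set) \<Rightarrow> 'p \<Rightarrow> ('v \<times> ereal) set" where
  "entries s F p = F p \<union> (case active s p of None \<Rightarrow> {} | Some a \<Rightarrow> {fst a})"

definition covered where
  "covered N s F p v x \<longleftrightarrow> p \<in> pruned s \<or> geps N s \<le> x \<or>
     (\<exists>(e,d)\<in>entries s F p. d + dsub N p e v \<le> x) \<or> (\<exists>c. (v,c) \<in># inbox s \<and> c \<le> x)"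

definition inv_msg where
  "inv_msg N s \<longleftrightarrow> (\<forall>v c. (v,c) \<in># inbox s \<longrightarrow> v \<in> Vs N \<and> SD N (vq N) v \<le> c)"

definition inv_act where
  "inv_act N s \<longleftrightarrow> (\<forall>p vb d L B. active s p = Some ((vb,d),L,B) \<longrightarrow>
      vb \<in> Vs N \<and> part N vb = p \<and> SD N (vq N) vb \<le> d \<and> L \<subseteq> live_set N p \<and> B \<subseteq> ext_edges N p \<and>
      (\<forall>vj v'. (vj,v') \<in> ext_edges N p - B \<longrightarrow> Dt s p v' \<le> d + dsub N p vb vj + ereal (wt N vj v')) \<and>
      (\<forall>vi \<in> live_set N p - L. Dt s p vi \<le> d + dsub N p vb vi))"

definition inv_dt where
  "inv_dt N s \<longleftrightarrow> (\<forall>p v. v \<in> Vs N \<longrightarrow> SD N (vq N) v \<le> Dt s p v)"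

definition inv_reps where
  "inv_reps N s \<longleftrightarrow> (\<forall>ob x. (ob,x) \<in> reps s \<longrightarrow> ob \<in> Obj N \<and> SD_obj N ob \<le> x)"

definition inv_leps where
  "inv_leps N s \<longleftrightarrow> (\<forall>p. p \<notin> pruned s \<longrightarrow> geps N s \<le> leps s p)"

definition inv_pr where
  "inv_pr N s \<longleftrightarrow> (\<forall>p \<in> pruned s. p \<noteq> part N (vq N) \<and> geps N s < Edist N p)"

definition inv_I1 where
  "inv_I1 N s F \<longleftrightarrow> (\<forall>p v. p \<notin> pruned s \<longrightarrow> v \<in> SG N p \<longrightarrow> Dt s p v \<noteq> \<infinity> \<longrightarrow>
      (\<exists>(e,d)\<in>entries s F p. d + dsub N p e v \<le> Dt s p v))"

definition inv_I2 where
  "inv_I2 N s F \<longleftrightarrow> (\<forall>p e d. p \<notin> pruned s \<longrightarrow> (e,d) \<in> F p \<longrightarrow>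
      (\<forall>vj v'. (vj,v') \<in> ext_edges N p \<longrightarrow> Dt s p v' \<le> d + dsub N p e vj + ereal (wt N vj v')) \<and>
      (\<forall>vi \<in> live_set N p. Dt s p vi \<le> d + dsub N p e vi))"

definition inv_rep where
  "inv_rep N s \<longleftrightarrow> (\<forall>p vi ob. p \<notin> pruned s \<longrightarrow> vi \<in> live_set N p \<longrightarrow> ob \<in> Obj N \<longrightarrow> vloc N ob = vi \<longrightarrow>
      rep s ob \<le> Dt s p vi + ereal (rem N ob) \<or> geps N s \<le> Dt s p vi + ereal (rem N ob) \<or>
      (\<exists>vb d L B. active s p = Some ((vb,d),L,B) \<and> vi \<in> L \<and> d + dsub N p vb vi \<le> Dt s p vi))"

definition inv_cov where
  "inv_cov N s F \<longleftrightarrow> (\<forall>p v'. v' \<in> Vs N \<longrightarrow> part N v' \<noteq> p \<longrightarrow> Dt s p v' \<noteq> \<infinity> \<longrightarrow>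
      covered N s F (part N v') v' (Dt s p v')) \<and> covered N s F (part N (vq N)) (vq N) 0"

definition Inv where
  "Inv N s F \<longleftrightarrow> inv_msg N s \<and> inv_act N s \<and> inv_dt N s \<and> inv_reps N s \<and> inv_leps N s \<and>
     inv_pr N s \<and> inv_I1 N s F \<and> inv_I2 N s F \<and> inv_rep N s \<and> inv_cov N s F"

lemma finite_rep_objs: "wf_inst N \<Longrightarrow> inv_reps N s \<Longrightarrow> finite (rep_objs s)"
proof -
  assume "wf_inst N" "inv_reps N s"
  then have "rep_objs s \<subseteq> Obj N" "finite (Obj N)"
    unfolding inv_reps_def rep_objs_def wf_inst_def by auto
  then show ?thesis using finite_subset by blast
qed

lemma covered_mono:
  assumes "covered N s F p v x" "pruned s \<subseteq> pruned s'" "geps N s' \<le> geps N s"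
    "entries s F p \<subseteq> entries s' F' p" "set_mset (inbox s) \<subseteq> set_mset (inbox s')"
  shows "covered N s' F' p v x"
  using assms unfolding covered_def by (auto intro: order_trans)

lemma init_Inv: "wf_inst N \<Longrightarrow> Inv N (init_state N) (\<lambda>_. {})"
  unfolding Inv_def inv_msg_def inv_act_def inv_dt_def inv_reps_def inv_leps_def inv_pr_def
    inv_I1_def inv_I2_def inv_rep_def inv_cov_def init_state_def covered_def
  by (auto simp: SD_refl wf_inst_def rep_def top_ereal_def)

lemma in_diff_single: "a \<in># M \<Longrightarrow> a \<noteq> b \<Longrightarrow> a \<in># M - {#b#}"
  by (simp add: in_diff_count)

lemma covered_remove:
  assumes cov: "covered N s F q v x"
    and "pruned s \<subseteq> pruned s'" "geps N s' \<le> geps N s" "entries s F q \<subseteq> entries s' F' q"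
    and ib: "inbox s' = inbox s - {#(vb,d)#}"
    and h: "d \<le> x \<Longrightarrow> v = vb \<Longrightarrow> covered N s' F' q v x"
  shows "covered N s' F' q v x"
proof -
  consider "q \<in> pruned s" | "geps N s \<le> x" | "\<exists>(e,d)\<in>entries s F q. d + dsub N q e v \<le> x"
    | c where "(v,c) \<in># inbox s" "c \<le> x"
    using cov unfolding covered_def by blast
  then show ?thesis
  proof cases
    case 4
    show ?thesis
    proof (cases "(v,c) = (vb,d)")
      case True then show ?thesis using h 4 by auto
    next
      case False
      then have "(v,c) \<in># inbox s'" using ib in_diff_single[OF 4(1) False] by simp
      then show ?thesis using 4 unfolding covered_def by blast
    qed
  qed (use assms in \<open>auto simp: covered_def intro: order_trans\<close>)
qed

lemma geps_cong: "reps s' = reps s \<Longrightarrow> geps N s' = geps N s"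
  unfolding geps_def rep_objs_def rep_def by simp

lemma step_discard:
  assumes wf: "wf_inst N" and I: "Inv N s F"
    and m: "(vb, d) \<in># inbox s" and pp: "p = part N vb" and act: "active s p = None"
    and cond: "p \<in> pruned s \<or> d > leps s p \<or> d > Dt s p vb"
  shows "Inv N (s\<lparr> inbox := inbox s - {#(vb, d)#} \<rparr>) F"
proof -
  let ?s = "s\<lparr> inbox := inbox s - {#(vb, d)#} \<rparr>"
  have ge: "geps N ?s = geps N s" by (rule geps_cong) simp
  have en: "entries ?s F = entries s F" unfolding entries_def by simp
  have vV: "vb \<in> Vs N" using I m unfolding Inv_def inv_msg_def by auto
  have cv: "covered N ?s F q v x" if c: "covered N s F q v x" and qv: "q = part N v" for q v x
  proof (rule covered_remove[OF c, where s'="?s" and F'=F and vb=vb and d=d])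
    assume dx: "d \<le> x" and vv: "v = vb"
    have qp: "q = p" using qv vv pp by simp
    consider "p \<in> pruned s" | "p \<notin> pruned s" "d > leps s p" | "p \<notin> pruned s" "d > Dt s p vb" using cond by blast
    then show "covered N ?s F q v x"
    proof cases
      case 1 then show ?thesis using qp unfolding covered_def by simp
    next
      case 2
      then have "geps N s \<le> leps s p" using I unfolding Inv_def inv_leps_def by blast
      then have "geps N ?s \<le> x" using 2 dx ge by simp
      then show ?thesis unfolding covered_def by simp
    next
      case 3
      have sg: "vb \<in> SG N p" using vV pp unfolding SG_def by simp
      have "Dt s p vb \<noteq> \<infinity>" using 3 by auto
      then obtain e d0 where "(e,d0) \<in> entries s F p" "d0 + dsub N p e vb \<le> Dt s p vb"
        using I 3 sg unfolding Inv_def inv_I1_def by blast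
      moreover have "Dt s p vb \<le> x" using 3 dx by simp
      ultimately show ?thesis using qp vv en unfolding covered_def by (auto intro!: bexI[of _ "(e,d0)"])
    qed
  qed (auto simp: ge en)
  show ?thesis
    using I unfolding Inv_def
  proof (intro conjI)
    show "inv_msg N ?s" using I unfolding Inv_def inv_msg_def by (auto dest: in_diffD)
    show "inv_act N ?s" using I unfolding Inv_def inv_act_def by simp
    show "inv_dt N ?s" using I unfolding Inv_def inv_dt_def by simp
    show "inv_reps N ?s" using I unfolding Inv_def inv_reps_def by simp
    show "inv_leps N ?s" using I unfolding Inv_def inv_leps_def ge by simp
    show "inv_pr N ?s" using I unfolding Inv_def inv_pr_def ge by simp
    show "inv_I1 N ?s F" using I unfolding Inv_def inv_I1_def en by simp
    show "inv_I2 N ?s F" using I unfolding Inv_def inv_I2_def by simp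
    show "inv_rep N ?s" using I unfolding Inv_def inv_rep_def ge rep_def by simp
    show "inv_cov N ?s F" using I cv unfolding Inv_def inv_cov_def by simp
  qed
qed

lemma step_start:
  assumes wf: "wf_inst N" and I: "Inv N s F"
    and m: "(vb, d) \<in># inbox s" and pp: "p = part N vb" and act: "active s p = None"
    and np: "p \<notin> pruned s" and dD: "d \<le> Dt s p vb"
  shows "Inv N (s\<lparr> inbox := inbox s - {#(vb, d)#},
                      Dt := (Dt s)(p := (Dt s p)(vb := d)),
                      active := (active s)(p := Some ((vb, d), live_set N p, ext_edges N p)) \<rparr>) F"
proof -
  let ?s = "s\<lparr> inbox := inbox s - {#(vb, d)#},
                      Dt := (Dt s)(p := (Dt s p)(vb := d)),
                      active := (active s)(p := Some ((vb, d), live_set N p, ext_edges N p)) \<rparr>"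
  have ge: "geps N ?s = geps N s" by (rule geps_cong) simp
  have en: "entries s F q \<subseteq> entries ?s F q" for q
    using act unfolding entries_def by auto
  have enp: "(vb, d) \<in> entries ?s F p" unfolding entries_def by simp
  have vV: "vb \<in> Vs N" and sdv: "SD N (vq N) vb \<le> d" using I m unfolding Inv_def inv_msg_def by auto
  have sg: "vb \<in> SG N p" using vV pp unfolding SG_def by simp
  have dtdec: "Dt ?s q v \<le> Dt s q v" for q v using dD by auto
  have cv: "covered N ?s F q v x" if c: "covered N s F q v x" and qv: "q = part N v" for q v x
  proof (rule covered_remove[OF c, where s'="?s" and F'=F and vb=vb and d=d])
    assume dx: "d \<le> x" and vv: "v = vb"
    have qp: "q = p" using qv vv pp by simp
    have "d + dsub N p vb vb \<le> x" using dsub_refl_add[OF sg, of d] dx by simp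
    then show "covered N ?s F q v x" using enp qp vv unfolding covered_def by blast
  qed (auto simp: ge en)
  show ?thesis
    using I unfolding Inv_def
  proof (intro conjI)
    show "inv_msg N ?s" using I unfolding Inv_def inv_msg_def by (auto dest: in_diffD)
    show "inv_act N ?s"
      unfolding inv_act_def
    proof (intro allI impI)
      fix q vb' d' L B assume a: "active ?s q = Some ((vb',d'),L,B)"
      show "vb' \<in> Vs N \<and> part N vb' = q \<and> SD N (vq N) vb' \<le> d' \<and> L \<subseteq> live_set N q \<and> B \<subseteq> ext_edges N q \<and>
      (\<forall>vj v'. (vj,v') \<in> ext_edges N q - B \<longrightarrow> Dt ?s q v' \<le> d' + dsub N q vb' vj + ereal (wt N vj v')) \<and>
      (\<forall>vi \<in> live_set N q - L. Dt ?s q vi \<le> d' + dsub N q vb' vi)"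
      proof (cases "q = p")
        case True
        then show ?thesis using a vV sdv pp by auto
      next
        case False
        then have "active s q = Some ((vb',d'),L,B)" "Dt ?s q = Dt s q" using a by auto
        then show ?thesis using I unfolding Inv_def inv_act_def by metis
      qed
    qed
    show "inv_dt N ?s"
      unfolding inv_dt_def
    proof (intro allI impI)
      fix q v assume "v \<in> Vs N"
      then show "SD N (vq N) v \<le> Dt ?s q v"
        using I sdv unfolding Inv_def inv_dt_def by (cases "q = p \<and> v = vb") auto
    qed
    show "inv_reps N ?s" using I unfolding Inv_def inv_reps_def by simp
    show "inv_leps N ?s" using I unfolding Inv_def inv_leps_def ge by simp
    show "inv_pr N ?s" using I unfolding Inv_def inv_pr_def ge by simp
    show "inv_I1 N ?s F"
      unfolding inv_I1_def
    proof (intro allI impI)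
      fix q v assume q: "q \<notin> pruned ?s" "v \<in> SG N q" "Dt ?s q v \<noteq> \<infinity>"
      show "\<exists>(e,d)\<in>entries ?s F q. d + dsub N q e v \<le> Dt ?s q v"
      proof (cases "q = p \<and> v = vb")
        case True
        then show ?thesis using enp dsub_refl_add[OF sg, of d] by auto
      next
        case False
        then have "Dt ?s q v = Dt s q v" by auto
        then show ?thesis using I q en unfolding Inv_def inv_I1_def by simp blast
      qed
    qed
    show "inv_I2 N ?s F"
      unfolding inv_I2_def
    proof (intro allI impI conjI ballI)
      fix q e d' vj v' assume a: "q \<notin> pruned ?s" "(e,d') \<in> F q" "(vj,v') \<in> ext_edges N q"
      then have "Dt s q v' \<le> d' + dsub N q e vj + ereal (wt N vj v')"
        using I unfolding Inv_def inv_I2_def by simp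
      then show "Dt ?s q v' \<le> d' + dsub N q e vj + ereal (wt N vj v')" using dtdec order_trans by blast
    next
      fix q e d' vi assume a: "q \<notin> pruned ?s" "(e,d') \<in> F q" "vi \<in> live_set N q"
      then have "Dt s q vi \<le> d' + dsub N q e vi"
        using I unfolding Inv_def inv_I2_def by simp
      then show "Dt ?s q vi \<le> d' + dsub N q e vi" using dtdec order_trans by blast
    qed
    show "inv_rep N ?s"
      unfolding inv_rep_def
    proof (intro allI impI)
      fix q vi ob assume a: "q \<notin> pruned ?s" "vi \<in> live_set N q" "ob \<in> Obj N" "vloc N ob = vi"
      show "rep ?s ob \<le> Dt ?s q vi + ereal (rem N ob) \<or> geps N ?s \<le> Dt ?s q vi + ereal (rem N ob) \<or>
        (\<exists>vb d L B. active ?s q = Some ((vb,d),L,B) \<and> vi \<in> L \<and> d + dsub N q vb vi \<le> Dt ?s q vi)"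
      proof (cases "q = p \<and> vi = vb")
        case True
        then show ?thesis using a dsub_refl_add[OF sg, of d] by auto
      next
        case False
        have r: "rep ?s ob = rep s ob" unfolding rep_def by simp
        have "rep s ob \<le> Dt s q vi + ereal (rem N ob) \<or> geps N s \<le> Dt s q vi + ereal (rem N ob) \<or>
          (\<exists>vb d L B. active s q = Some ((vb,d),L,B) \<and> vi \<in> L \<and> d + dsub N q vb vi \<le> Dt s q vi)"
          using I a unfolding Inv_def inv_rep_def by simp
        note P = this
        have dq: "Dt ?s q vi = Dt s q vi" using False by auto
        have aq: "active ?s q = active s q" if "q \<noteq> p" using that by simp
        show ?thesis
        proof (cases "q = p")
          case True
          with P act have "rep s ob \<le> Dt s q vi + ereal (rem N ob) \<or> geps N s \<le> Dt s q vi + ereal (rem N ob)"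
            by simp
          then show ?thesis unfolding r ge dq by blast
        next
          case False
          then show ?thesis using P unfolding r ge dq aq[OF False] by blast
        qed
      qed
    qed
    show "inv_cov N ?s F"
      unfolding inv_cov_def
    proof (intro conjI allI impI)
      fix q v' assume a: "v' \<in> Vs N" "part N v' \<noteq> q" "Dt ?s q v' \<noteq> \<infinity>"
      have "Dt ?s q v' = Dt s q v'" using a pp by auto
      then show "covered N ?s F (part N v') v' (Dt ?s q v')"
        using I a cv unfolding Inv_def inv_cov_def by simp
    next
      show "covered N ?s F (part N (vq N)) (vq N) 0"
        using I cv unfolding Inv_def inv_cov_def by simp
    qed
  qed
qed

lemma disj_mono3:
  fixes a a' g g' X :: ereal
  shows "a' \<le> a \<Longrightarrow> g' \<le> g \<Longrightarrow> a \<le> X \<or> g \<le> X \<or> Q \<Longrightarrow> (Q \<Longrightarrow> Q') \<Longrightarrow> a' \<le> X \<or> g' \<le> X \<or> Q'"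
  by (meson order_trans)

lemma act_facts:
  assumes "Inv N s F" "active s p = Some ((vb,d),L,B)"
  shows "vb \<in> Vs N" "part N vb = p" "SD N (vq N) vb \<le> d" "L \<subseteq> live_set N p" "B \<subseteq> ext_edges N p"
    "\<And>vj v'. (vj,v') \<in> ext_edges N p - B \<Longrightarrow> Dt s p v' \<le> d + dsub N p vb vj + ereal (wt N vj v')"
    "\<And>vi. vi \<in> live_set N p - L \<Longrightarrow> Dt s p vi \<le> d + dsub N p vb vi"
  using assms unfolding Inv_def inv_act_def by blast+

lemma live_SG: "live_set N p \<subseteq> SG N p" unfolding live_set_def by auto

lemma ext_facts: "(vj,v') \<in> ext_edges N p \<Longrightarrow> vj \<in> SG N p \<and> v' \<in> Vs N \<and> part N v' \<noteq> p \<and> (vj,v') \<in> Es N"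
  unfolding ext_edges_def is_border_def by auto

lemma step_live_upd:
  assumes wf: "wf_inst N" and k1: "1 \<le> kq N" and I: "Inv N s F"
    and act: "active s p = Some ((vb, d), L, B)" and viL: "vi \<in> L"
    and cdef: "c = d + dsub N p vb vi" and cD: "c \<le> Dt s p vi"
  shows "Inv N (s\<lparr> Dt := (Dt s)(p := (Dt s p)(vi := c)),
                      reps := reps s \<union> {(ob, c + ereal (rem N ob)) | ob.
                                ob \<in> Obj N \<and> vloc N ob = vi \<and> c + ereal (rem N ob) < leps s p},
                      active := (active s)(p := Some ((vb, d), L - {vi}, B)) \<rparr>) F"
proof -
  let ?s = "s\<lparr> Dt := (Dt s)(p := (Dt s p)(vi := c)),
                      reps := reps s \<union> {(ob, c + ereal (rem N ob)) | ob.
                                ob \<in> Obj N \<and> vloc N ob = vi \<and> c + ereal (rem N ob) < leps s p},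
                      active := (active s)(p := Some ((vb, d), L - {vi}, B)) \<rparr>"
  note af = act_facts[OF I act]
  have viSG: "vi \<in> SG N p" using subsetD[OF live_SG subsetD[OF af(4) viL]] .
  have viV: "vi \<in> Vs N" using subsetD[OF SG_sub viSG] .
  have sdc: "SD N (vq N) vi \<le> c"
  proof -
    have "SD N (vq N) vi \<le> SD N (vq N) vb + dsub N p vb vi" by (rule SD_tri_sub[OF wf])
    also have "\<dots> \<le> d + dsub N p vb vi" using af(3) by (rule add_right_mono)
    finally show ?thesis using cdef by simp
  qed
  have ireps: "inv_reps N ?s"
    using I sdc unfolding Inv_def inv_reps_def SD_obj_def by (auto intro: add_right_mono)
  have fin: "finite (rep_objs ?s)" by (rule finite_rep_objs[OF wf ireps])
  have gm: "geps N ?s \<le> geps N s" by (rule geps_mono[OF _ fin k1]) auto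
  have rm: "rep ?s ob \<le> rep s ob" for ob by (rule rep_mono) auto
  have dtdec: "Dt ?s q v \<le> Dt s q v" for q v using cD by auto
  have en: "entries ?s F q = entries s F q" for q using act by (cases "q = p") (simp_all add: entries_def)
  show ?thesis
    unfolding Inv_def
  proof (intro conjI)
    show "inv_msg N ?s" using I unfolding Inv_def inv_msg_def by simp
    show "inv_act N ?s"
      unfolding inv_act_def
    proof (intro allI impI)
      fix q vb' d' L' B' assume a: "active ?s q = Some ((vb',d'),L',B')"
      show "vb' \<in> Vs N \<and> part N vb' = q \<and> SD N (vq N) vb' \<le> d' \<and> L' \<subseteq> live_set N q \<and> B' \<subseteq> ext_edges N q \<and>
      (\<forall>vj v'. (vj,v') \<in> ext_edges N q - B' \<longrightarrow> Dt ?s q v' \<le> d' + dsub N q vb' vj + ereal (wt N vj v')) \<and>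
      (\<forall>vi \<in> live_set N q - L'. Dt ?s q vi \<le> d' + dsub N q vb' vi)"
      proof (cases "q = p")
        case True
        then have eq: "vb' = vb" "d' = d" "L' = L - {vi}" "B' = B" using a by auto
        have e1: "\<forall>vj v'. (vj,v') \<in> ext_edges N q - B' \<longrightarrow> Dt ?s q v' \<le> d' + dsub N q vb' vj + ereal (wt N vj v')"
        proof (intro allI impI)
          fix vj v' assume h: "(vj,v') \<in> ext_edges N q - B'"
          then have "(vj,v') \<in> ext_edges N p - B" using True eq by simp
          then have "Dt s p v' \<le> d + dsub N p vb vj + ereal (wt N vj v')" by (rule af(6))
          then show "Dt ?s q v' \<le> d' + dsub N q vb' vj + ereal (wt N vj v')"
            using order_trans[OF dtdec[of p v']] True eq by simp
        qed
        have e2: "\<forall>vi' \<in> live_set N q - L'. Dt ?s q vi' \<le> d' + dsub N q vb' vi'"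
        proof
          fix vi' assume h: "vi' \<in> live_set N q - L'"
          show "Dt ?s q vi' \<le> d' + dsub N q vb' vi'"
          proof (cases "vi' = vi")
            case True
            then show ?thesis using \<open>q = p\<close> eq cdef by simp
          next
            case False
            then have "vi' \<in> live_set N p - L" using h \<open>q = p\<close> eq by simp
            then have "Dt s p vi' \<le> d + dsub N p vb vi'" by (rule af(7))
            then show ?thesis using order_trans[OF dtdec[of p vi']] \<open>q = p\<close> eq by simp
          qed
        qed
        have L': "L' \<subseteq> live_set N q" using af(4) eq True by auto
        show ?thesis using af(1,2,3,5) True eq e1 e2 L' by simp
      next
        case False
        then have h1: "active s q = Some ((vb',d'),L',B')" and h2: "Dt ?s q = Dt s q" using a by auto
        note af2 = act_facts[OF I h1]
        show ?thesis unfolding h2 using af2(1-5) af2(6) af2(7) by blast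
      qed
    qed
    show "inv_dt N ?s"
      unfolding inv_dt_def
    proof (intro allI impI)
      fix q v assume "v \<in> Vs N"
      then show "SD N (vq N) v \<le> Dt ?s q v"
        using I sdc unfolding Inv_def inv_dt_def by (cases "q = p \<and> v = vi") auto
    qed
    show "inv_reps N ?s" by (rule ireps)
    show "inv_leps N ?s" using I order_trans[OF gm] unfolding Inv_def inv_leps_def by simp
    show "inv_pr N ?s" using I le_less_trans[OF gm] unfolding Inv_def inv_pr_def by simp
    show "inv_I1 N ?s F"
      unfolding inv_I1_def
    proof (intro allI impI)
      fix q v assume q: "q \<notin> pruned ?s" "v \<in> SG N q" "Dt ?s q v \<noteq> \<infinity>"
      show "\<exists>(e,d)\<in>entries ?s F q. d + dsub N q e v \<le> Dt ?s q v"
      proof (cases "q = p \<and> v = vi")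
        case True
        have "(vb, d) \<in> entries ?s F p" unfolding entries_def by simp
        then show ?thesis using True cdef by auto
      next
        case False
        then have "Dt ?s q v = Dt s q v" by auto
        then show ?thesis using I q en unfolding Inv_def inv_I1_def by simp
      qed
    qed
    show "inv_I2 N ?s F"
      unfolding inv_I2_def
    proof (intro allI impI conjI ballI)
      fix q e d' vj v' assume a: "q \<notin> pruned ?s" "(e,d') \<in> F q" "(vj,v') \<in> ext_edges N q"
      then have "Dt s q v' \<le> d' + dsub N q e vj + ereal (wt N vj v')"
        using I unfolding Inv_def inv_I2_def by simp
      then show "Dt ?s q v' \<le> d' + dsub N q e vj + ereal (wt N vj v')" using dtdec order_trans by blast
    next
      fix q e d' vi' assume a: "q \<notin> pruned ?s" "(e,d') \<in> F q" "vi' \<in> live_set N q"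
      then have "Dt s q vi' \<le> d' + dsub N q e vi'"
        using I unfolding Inv_def inv_I2_def by simp
      then show "Dt ?s q vi' \<le> d' + dsub N q e vi'" using dtdec order_trans by blast
    qed
    show "inv_rep N ?s"
      unfolding inv_rep_def
    proof (intro allI impI)
      fix q vi' ob assume a: "q \<notin> pruned ?s" "vi' \<in> live_set N q" "ob \<in> Obj N" "vloc N ob = vi'"
      have P: "rep s ob \<le> Dt s q vi' + ereal (rem N ob) \<or> geps N s \<le> Dt s q vi' + ereal (rem N ob) \<or>
          (\<exists>vb d L B. active s q = Some ((vb,d),L,B) \<and> vi' \<in> L \<and> d + dsub N q vb vi' \<le> Dt s q vi')"
        using I a unfolding Inv_def inv_rep_def by simp
      show "rep ?s ob \<le> Dt ?s q vi' + ereal (rem N ob) \<or> geps N ?s \<le> Dt ?s q vi' + ereal (rem N ob) \<or>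
        (\<exists>vb d L B. active ?s q = Some ((vb,d),L,B) \<and> vi' \<in> L \<and> d + dsub N q vb vi' \<le> Dt ?s q vi')"
      proof (cases "q = p \<and> vi' = vi")
        case True
        have dq: "Dt ?s q vi' = c" using True by simp
        show ?thesis
        proof (cases "c + ereal (rem N ob) < leps s p")
          case True
          then have "(ob, c + ereal (rem N ob)) \<in> reps ?s" using a \<open>q = p \<and> vi' = vi\<close> by auto
          then have "rep ?s ob \<le> c + ereal (rem N ob)" unfolding rep_def by (auto intro: Inf_lower)
          then show ?thesis using dq by simp
        next
          case False
          have "geps N s \<le> leps s p" using I a \<open>q = p \<and> vi' = vi\<close> unfolding Inv_def inv_leps_def by simp
          then have "geps N ?s \<le> c + ereal (rem N ob)" using False gm by auto
          then show ?thesis using dq by simp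
        qed
      next
        case False
        have dq: "Dt ?s q vi' = Dt s q vi'" using False by auto
        show ?thesis
        proof (rule disj_mono3[OF rm gm P[unfolded dq[symmetric]]])
          assume "\<exists>vb d L B. active s q = Some ((vb,d),L,B) \<and> vi' \<in> L \<and> d + dsub N q vb vi' \<le> Dt ?s q vi'"
          then show "\<exists>vb d L B. active ?s q = Some ((vb,d),L,B) \<and> vi' \<in> L \<and> d + dsub N q vb vi' \<le> Dt ?s q vi'"
            using False act by (cases "q = p") auto
        qed
      qed
    qed
    show "inv_cov N ?s F"
      unfolding inv_cov_def
    proof (intro conjI allI impI)
      fix q v' assume a: "v' \<in> Vs N" "part N v' \<noteq> q" "Dt ?s q v' \<noteq> \<infinity>"
      have "Dt ?s q v' = Dt s q v'" using a viSG unfolding SG_def by auto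
      moreover have "covered N s F (part N v') v' (Dt s q v')"
        using I a calculation unfolding Inv_def inv_cov_def by simp
      ultimately show "covered N ?s F (part N v') v' (Dt ?s q v')"
        using covered_mono[of N s F "part N v'" v' "Dt s q v'" ?s F] gm en by simp
    next
      have "covered N s F (part N (vq N)) (vq N) 0"
        using I unfolding Inv_def inv_cov_def by simp
      then show "covered N ?s F (part N (vq N)) (vq N) 0"
        using covered_mono[of N s F "part N (vq N)" "vq N" 0 ?s F] gm en by simp
    qed
  qed
qed

lemma step_live_skip:
  assumes wf: "wf_inst N" and I: "Inv N s F"
    and act: "active s p = Some ((vb, d), L, B)" and viL: "vi \<in> L"
    and skip: "\<not> d + dsub N p vb vi \<le> Dt s p vi"
  shows "Inv N (s\<lparr> active := (active s)(p := Some ((vb, d), L - {vi}, B)) \<rparr>) F"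
proof -
  let ?s = "s\<lparr> active := (active s)(p := Some ((vb, d), L - {vi}, B)) \<rparr>"
  note af = act_facts[OF I act]
  have ge: "geps N ?s = geps N s" by (rule geps_cong) simp
  have r: "rep ?s = rep s" unfolding rep_def by simp
  have dtq: "Dt ?s = Dt s" by simp
  have en: "entries ?s F q = entries s F q" for q using act by (cases "q = p") (simp_all add: entries_def)
  show ?thesis
    unfolding Inv_def
  proof (intro conjI)
    show "inv_msg N ?s" using I unfolding Inv_def inv_msg_def by simp
    show "inv_act N ?s"
      unfolding inv_act_def
    proof (intro allI impI)
      fix q vb' d' L' B' assume a: "active ?s q = Some ((vb',d'),L',B')"
      show "vb' \<in> Vs N \<and> part N vb' = q \<and> SD N (vq N) vb' \<le> d' \<and> L' \<subseteq> live_set N q \<and> B' \<subseteq> ext_edges N q \<and>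
      (\<forall>vj v'. (vj,v') \<in> ext_edges N q - B' \<longrightarrow> Dt ?s q v' \<le> d' + dsub N q vb' vj + ereal (wt N vj v')) \<and>
      (\<forall>vi \<in> live_set N q - L'. Dt ?s q vi \<le> d' + dsub N q vb' vi)"
      proof (cases "q = p")
        case True
        then have eq: "vb' = vb" "d' = d" "L' = L - {vi}" "B' = B" using a by auto
        have e2: "\<forall>vi' \<in> live_set N q - L'. Dt ?s q vi' \<le> d' + dsub N q vb' vi'"
        proof
          fix vi' assume h: "vi' \<in> live_set N q - L'"
          show "Dt ?s q vi' \<le> d' + dsub N q vb' vi'"
          proof (cases "vi' = vi")
            case True
            then show ?thesis using \<open>q = p\<close> eq skip by simp
          next
            case False
            then have "vi' \<in> live_set N p - L" using h \<open>q = p\<close> eq by simp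
            then have "Dt s p vi' \<le> d + dsub N p vb vi'" by (rule af(7))
            then show ?thesis using \<open>q = p\<close> eq by simp
          qed
        qed
        have L': "L' \<subseteq> live_set N q" using af(4) eq True by auto
        show ?thesis using af(1,2,3,5) af(6) True eq e2 L' by simp
      next
        case False
        then have h1: "active s q = Some ((vb',d'),L',B')" using a by auto
        note af2 = act_facts[OF I h1]
        show ?thesis using af2(1-5) af2(6) af2(7) by simp
      qed
    qed
    show "inv_dt N ?s" using I unfolding Inv_def inv_dt_def by simp
    show "inv_reps N ?s" using I unfolding Inv_def inv_reps_def by simp
    show "inv_leps N ?s" using I unfolding Inv_def inv_leps_def ge by simp
    show "inv_pr N ?s" using I unfolding Inv_def inv_pr_def ge by simp
    show "inv_I1 N ?s F" using I unfolding Inv_def inv_I1_def en by simp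
    show "inv_I2 N ?s F" using I unfolding Inv_def inv_I2_def by simp
    show "inv_rep N ?s"
      unfolding inv_rep_def
    proof (intro allI impI)
      fix q vi' ob assume a: "q \<notin> pruned ?s" "vi' \<in> live_set N q" "ob \<in> Obj N" "vloc N ob = vi'"
      have P: "rep s ob \<le> Dt s q vi' + ereal (rem N ob) \<or> geps N s \<le> Dt s q vi' + ereal (rem N ob) \<or>
          (\<exists>vb d L B. active s q = Some ((vb,d),L,B) \<and> vi' \<in> L \<and> d + dsub N q vb vi' \<le> Dt s q vi')"
        using I a unfolding Inv_def inv_rep_def by simp
      show "rep ?s ob \<le> Dt ?s q vi' + ereal (rem N ob) \<or> geps N ?s \<le> Dt ?s q vi' + ereal (rem N ob) \<or>
        (\<exists>vb d L B. active ?s q = Some ((vb,d),L,B) \<and> vi' \<in> L \<and> d + dsub N q vb vi' \<le> Dt ?s q vi')"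
      proof (cases "q = p")
        case True
        show ?thesis
        proof (cases "vi' = vi")
          case True
          with P act skip \<open>q = p\<close> have "rep s ob \<le> Dt s q vi' + ereal (rem N ob) \<or> geps N s \<le> Dt s q vi' + ereal (rem N ob)"
            by auto
          then show ?thesis unfolding r ge dtq by blast
        next
          case False
          with P act \<open>q = p\<close> show ?thesis unfolding r ge by auto
        qed
      next
        case False
        then show ?thesis using P unfolding r ge by simp
      qed
    qed
    show "inv_cov N ?s F"
      unfolding inv_cov_def
    proof (intro conjI allI impI)
      fix q v' assume a: "v' \<in> Vs N" "part N v' \<noteq> q" "Dt ?s q v' \<noteq> \<infinity>"
      have "covered N s F (part N v') v' (Dt s q v')"
        using I a unfolding Inv_def inv_cov_def by simp
      then show "covered N ?s F (part N v') v' (Dt ?s q v')"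
        using covered_mono[of N s F "part N v'" v' "Dt s q v'" ?s F] ge en by simp
    next
      have "covered N s F (part N (vq N)) (vq N) 0"
        using I unfolding Inv_def inv_cov_def by simp
      then show "covered N ?s F (part N (vq N)) (vq N) 0"
        using covered_mono[of N s F "part N (vq N)" "vq N" 0 ?s F] ge en by simp
    qed
  qed
qed

lemma step_ext_upd:
  assumes wf: "wf_inst N" and I: "Inv N s F"
    and act: "active s p = Some ((vb, d), L, B)" and eB: "(vj, v') \<in> B"
    and cdef: "c = d + dsub N p vb vj + ereal (wt N vj v')" and cD: "c \<le> Dt s p v'"
  shows "Inv N (s\<lparr> Dt := (Dt s)(p := (Dt s p)(v' := c)),
                      inbox := inbox s + {#(v', c)#},
                      active := (active s)(p := Some ((vb, d), L, B - {(vj, v')})) \<rparr>) F"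
proof -
  let ?s = "s\<lparr> Dt := (Dt s)(p := (Dt s p)(v' := c)),
                      inbox := inbox s + {#(v', c)#},
                      active := (active s)(p := Some ((vb, d), L, B - {(vj, v')})) \<rparr>"
  note af = act_facts[OF I act]
  have ee: "(vj, v') \<in> ext_edges N p" using subsetD[OF af(5) eB] .
  note ef = ext_facts[OF ee]
  have vjV: "vj \<in> Vs N" using subsetD[OF SG_sub, of vj N p] ef by blast
  have v'V: "v' \<in> Vs N" and v'p: "part N v' \<noteq> p" and edge: "(vj, v') \<in> Es N" using ef by auto
  have v'SG: "v' \<notin> SG N q" if "q = p" for q using v'p that unfolding SG_def by auto
  have sdc: "SD N (vq N) v' \<le> c"
  proof -
    have "SD N (vq N) v' \<le> SD N (vq N) vj + ereal (wt N vj v')" by (rule SD_tri_edge[OF wf edge vjV v'V])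
    also have "\<dots> \<le> (SD N (vq N) vb + dsub N p vb vj) + ereal (wt N vj v')"
      by (rule add_right_mono[OF SD_tri_sub[OF wf]])
    also have "\<dots> \<le> (d + dsub N p vb vj) + ereal (wt N vj v')"
      by (rule add_right_mono[OF add_right_mono[OF af(3)]])
    finally show ?thesis using cdef by simp
  qed
  have ge: "geps N ?s = geps N s" by (rule geps_cong) simp
  have r: "rep ?s = rep s" unfolding rep_def by simp
  have dtdec: "Dt ?s q v \<le> Dt s q v" for q v using cD by auto
  have en: "entries ?s F q = entries s F q" for q using act by (cases "q = p") (simp_all add: entries_def)
  have dsg: "Dt ?s q v = Dt s q v" if "v \<in> SG N q" for q v using that v'SG by auto
  show ?thesis
    unfolding Inv_def
  proof (intro conjI)
    show "inv_msg N ?s" using I sdc v'V unfolding Inv_def inv_msg_def by auto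
    show "inv_act N ?s"
      unfolding inv_act_def
    proof (intro allI impI)
      fix q vb' d' L' B' assume a: "active ?s q = Some ((vb',d'),L',B')"
      show "vb' \<in> Vs N \<and> part N vb' = q \<and> SD N (vq N) vb' \<le> d' \<and> L' \<subseteq> live_set N q \<and> B' \<subseteq> ext_edges N q \<and>
      (\<forall>vj v'. (vj,v') \<in> ext_edges N q - B' \<longrightarrow> Dt ?s q v' \<le> d' + dsub N q vb' vj + ereal (wt N vj v')) \<and>
      (\<forall>vi \<in> live_set N q - L'. Dt ?s q vi \<le> d' + dsub N q vb' vi)"
      proof (cases "q = p")
        case True
        then have eq: "vb' = vb" "d' = d" "L' = L" "B' = B - {(vj, v')}" using a by auto
        have e1: "\<forall>vj2 v2. (vj2,v2) \<in> ext_edges N q - B' \<longrightarrow> Dt ?s q v2 \<le> d' + dsub N q vb' vj2 + ereal (wt N vj2 v2)"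
        proof (intro allI impI)
          fix vj2 v2 assume h: "(vj2,v2) \<in> ext_edges N q - B'"
          show "Dt ?s q v2 \<le> d' + dsub N q vb' vj2 + ereal (wt N vj2 v2)"
          proof (cases "(vj2, v2) = (vj, v')")
            case True
            then show ?thesis using \<open>q = p\<close> eq cdef by simp
          next
            case False
            then have "(vj2,v2) \<in> ext_edges N p - B" using h \<open>q = p\<close> eq by simp
            then have "Dt s p v2 \<le> d + dsub N p vb vj2 + ereal (wt N vj2 v2)" by (rule af(6))
            then show ?thesis using order_trans[OF dtdec[of p v2]] \<open>q = p\<close> eq by simp
          qed
        qed
        have e2: "\<forall>vi' \<in> live_set N q - L'. Dt ?s q vi' \<le> d' + dsub N q vb' vi'"
        proof
          fix vi' assume h: "vi' \<in> live_set N q - L'"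
          then have "vi' \<in> live_set N p - L" using \<open>q = p\<close> eq by simp
          then have "Dt s p vi' \<le> d + dsub N p vb vi'" by (rule af(7))
          then show "Dt ?s q vi' \<le> d' + dsub N q vb' vi'" using order_trans[OF dtdec[of p vi']] \<open>q = p\<close> eq by simp
        qed
        have B': "B' \<subseteq> ext_edges N q" using af(5) eq True by auto
        show ?thesis using af(1,2,3,4) True eq e1 e2 B' by simp
      next
        case False
        then have h1: "active s q = Some ((vb',d'),L',B')" and h2: "Dt ?s q = Dt s q" using a by auto
        note af2 = act_facts[OF I h1]
        show ?thesis unfolding h2 using af2(1-5) af2(6) af2(7) by blast
      qed
    qed
    show "inv_dt N ?s"
      unfolding inv_dt_def
    proof (intro allI impI)
      fix q v assume "v \<in> Vs N"
      then show "SD N (vq N) v \<le> Dt ?s q v"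
        using I sdc unfolding Inv_def inv_dt_def by (cases "q = p \<and> v = v'") auto
    qed
    show "inv_reps N ?s" using I unfolding Inv_def inv_reps_def by simp
    show "inv_leps N ?s" using I unfolding Inv_def inv_leps_def ge by simp
    show "inv_pr N ?s" using I unfolding Inv_def inv_pr_def ge by simp
    show "inv_I1 N ?s F"
      unfolding inv_I1_def
    proof (intro allI impI)
      fix q v assume q: "q \<notin> pruned ?s" "v \<in> SG N q" "Dt ?s q v \<noteq> \<infinity>"
      then show "\<exists>(e,d)\<in>entries ?s F q. d + dsub N q e v \<le> Dt ?s q v"
        using I dsg[OF q(2)] en unfolding Inv_def inv_I1_def by simp
    qed
    show "inv_I2 N ?s F"
      unfolding inv_I2_def
    proof (intro allI impI conjI ballI)
      fix q e d' vj v' assume a: "q \<notin> pruned ?s" "(e,d') \<in> F q" "(vj,v') \<in> ext_edges N q"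
      then have "Dt s q v' \<le> d' + dsub N q e vj + ereal (wt N vj v')"
        using I unfolding Inv_def inv_I2_def by simp
      then show "Dt ?s q v' \<le> d' + dsub N q e vj + ereal (wt N vj v')" using dtdec order_trans by blast
    next
      fix q e d' vi' assume a: "q \<notin> pruned ?s" "(e,d') \<in> F q" "vi' \<in> live_set N q"
      then have "Dt s q vi' \<le> d' + dsub N q e vi'"
        using I unfolding Inv_def inv_I2_def by simp
      then show "Dt ?s q vi' \<le> d' + dsub N q e vi'" using dtdec order_trans by blast
    qed
    show "inv_rep N ?s"
      unfolding inv_rep_def
    proof (intro allI impI)
      fix q vi' ob assume a: "q \<notin> pruned ?s" "vi' \<in> live_set N q" "ob \<in> Obj N" "vloc N ob = vi'"
      have P: "rep s ob \<le> Dt s q vi' + ereal (rem N ob) \<or> geps N s \<le> Dt s q vi' + ereal (rem N ob) \<or>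
          (\<exists>vb d L B. active s q = Some ((vb,d),L,B) \<and> vi' \<in> L \<and> d + dsub N q vb vi' \<le> Dt s q vi')"
        using I a unfolding Inv_def inv_rep_def by simp
      have dq: "Dt ?s q vi' = Dt s q vi'" using dsg subsetD[OF live_SG a(2)] by blast
      have aq: "(\<exists>vb d L B. active s q = Some ((vb,d),L,B) \<and> vi' \<in> L \<and> d + dsub N q vb vi' \<le> Dt s q vi') \<Longrightarrow>
          (\<exists>vb d L B. active ?s q = Some ((vb,d),L,B) \<and> vi' \<in> L \<and> d + dsub N q vb vi' \<le> Dt s q vi')"
        using act by (cases "q = p") auto
      show "rep ?s ob \<le> Dt ?s q vi' + ereal (rem N ob) \<or> geps N ?s \<le> Dt ?s q vi' + ereal (rem N ob) \<or>
        (\<exists>vb d L B. active ?s q = Some ((vb,d),L,B) \<and> vi' \<in> L \<and> d + dsub N q vb vi' \<le> Dt ?s q vi')"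
        unfolding r ge dq using P aq by blast
    qed
    show "inv_cov N ?s F"
      unfolding inv_cov_def
    proof (intro conjI allI impI)
      fix q v2 assume a: "v2 \<in> Vs N" "part N v2 \<noteq> q" "Dt ?s q v2 \<noteq> \<infinity>"
      show "covered N ?s F (part N v2) v2 (Dt ?s q v2)"
      proof (cases "q = p \<and> v2 = v'")
        case True
        then have "(v2, Dt ?s q v2) \<in># inbox ?s" by simp
        then show ?thesis unfolding covered_def by blast
      next
        case False
        then have dq: "Dt ?s q v2 = Dt s q v2" by auto
        have "covered N s F (part N v2) v2 (Dt s q v2)"
          using I a dq unfolding Inv_def inv_cov_def by simp
        then show ?thesis
          using covered_mono[of N s F "part N v2" v2 "Dt s q v2" ?s F] ge en dq by (simp add: subset_insertI)
      qed
    next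
      have "covered N s F (part N (vq N)) (vq N) 0"
        using I unfolding Inv_def inv_cov_def by simp
      then show "covered N ?s F (part N (vq N)) (vq N) 0"
        using covered_mono[of N s F "part N (vq N)" "vq N" 0 ?s F] ge en by (simp add: subset_insertI)
    qed
  qed
qed

lemma step_ext_skip:
  assumes wf: "wf_inst N" and I: "Inv N s F"
    and act: "active s p = Some ((vb, d), L, B)" and eB: "(vj, v') \<in> B"
    and skip: "\<not> d + dsub N p vb vj + ereal (wt N vj v') \<le> Dt s p v'"
  shows "Inv N (s\<lparr> active := (active s)(p := Some ((vb, d), L, B - {(vj, v')})) \<rparr>) F"
proof -
  let ?s = "s\<lparr> active := (active s)(p := Some ((vb, d), L, B - {(vj, v')})) \<rparr>"
  note af = act_facts[OF I act]
  have ge: "geps N ?s = geps N s" by (rule geps_cong) simp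
  have r: "rep ?s = rep s" unfolding rep_def by simp
  have dtq: "Dt ?s = Dt s" by simp
  have en: "entries ?s F q = entries s F q" for q using act by (cases "q = p") (simp_all add: entries_def)
  show ?thesis
    unfolding Inv_def
  proof (intro conjI)
    show "inv_msg N ?s" using I unfolding Inv_def inv_msg_def by simp
    show "inv_act N ?s"
      unfolding inv_act_def
    proof (intro allI impI)
      fix q vb' d' L' B' assume a: "active ?s q = Some ((vb',d'),L',B')"
      show "vb' \<in> Vs N \<and> part N vb' = q \<and> SD N (vq N) vb' \<le> d' \<and> L' \<subseteq> live_set N q \<and> B' \<subseteq> ext_edges N q \<and>
      (\<forall>vj v'. (vj,v') \<in> ext_edges N q - B' \<longrightarrow> Dt ?s q v' \<le> d' + dsub N q vb' vj + ereal (wt N vj v')) \<and>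
      (\<forall>vi \<in> live_set N q - L'. Dt ?s q vi \<le> d' + dsub N q vb' vi)"
      proof (cases "q = p")
        case True
        then have eq: "vb' = vb" "d' = d" "L' = L" "B' = B - {(vj, v')}" using a by auto
        have e1: "\<forall>vj2 v2. (vj2,v2) \<in> ext_edges N q - B' \<longrightarrow> Dt ?s q v2 \<le> d' + dsub N q vb' vj2 + ereal (wt N vj2 v2)"
        proof (intro allI impI)
          fix vj2 v2 assume h: "(vj2,v2) \<in> ext_edges N q - B'"
          show "Dt ?s q v2 \<le> d' + dsub N q vb' vj2 + ereal (wt N vj2 v2)"
          proof (cases "(vj2, v2) = (vj, v')")
            case True
            then show ?thesis using \<open>q = p\<close> eq skip by simp
          next
            case False
            then have "(vj2,v2) \<in> ext_edges N p - B" using h \<open>q = p\<close> eq by simp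
            then have "Dt s p v2 \<le> d + dsub N p vb vj2 + ereal (wt N vj2 v2)" by (rule af(6))
            then show ?thesis using \<open>q = p\<close> eq by simp
          qed
        qed
        have B': "B' \<subseteq> ext_edges N q" using af(5) eq True by auto
        show ?thesis using af(1,2,3,4) af(7) True eq e1 B' by simp
      next
        case False
        then have h1: "active s q = Some ((vb',d'),L',B')" using a by auto
        note af2 = act_facts[OF I h1]
        show ?thesis unfolding dtq using af2(1-5) af2(6) af2(7) by blast
      qed
    qed
    show "inv_dt N ?s" using I unfolding Inv_def inv_dt_def by simp
    show "inv_reps N ?s" using I unfolding Inv_def inv_reps_def by simp
    show "inv_leps N ?s" using I unfolding Inv_def inv_leps_def ge by simp
    show "inv_pr N ?s" using I unfolding Inv_def inv_pr_def ge by simp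
    show "inv_I1 N ?s F" using I unfolding Inv_def inv_I1_def en by simp
    show "inv_I2 N ?s F" using I unfolding Inv_def inv_I2_def by simp
    show "inv_rep N ?s"
      unfolding inv_rep_def
    proof (intro allI impI)
      fix q vi' ob assume a: "q \<notin> pruned ?s" "vi' \<in> live_set N q" "ob \<in> Obj N" "vloc N ob = vi'"
      have P: "rep s ob \<le> Dt s q vi' + ereal (rem N ob) \<or> geps N s \<le> Dt s q vi' + ereal (rem N ob) \<or>
          (\<exists>vb d L B. active s q = Some ((vb,d),L,B) \<and> vi' \<in> L \<and> d + dsub N q vb vi' \<le> Dt s q vi')"
        using I a unfolding Inv_def inv_rep_def by simp
      have aq: "(\<exists>vb d L B. active s q = Some ((vb,d),L,B) \<and> vi' \<in> L \<and> d + dsub N q vb vi' \<le> Dt s q vi') \<Longrightarrow>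
          (\<exists>vb d L B. active ?s q = Some ((vb,d),L,B) \<and> vi' \<in> L \<and> d + dsub N q vb vi' \<le> Dt s q vi')"
        using act by (cases "q = p") auto
      show "rep ?s ob \<le> Dt ?s q vi' + ereal (rem N ob) \<or> geps N ?s \<le> Dt ?s q vi' + ereal (rem N ob) \<or>
        (\<exists>vb d L B. active ?s q = Some ((vb,d),L,B) \<and> vi' \<in> L \<and> d + dsub N q vb vi' \<le> Dt ?s q vi')"
        unfolding r ge dtq using P aq by blast
    qed
    show "inv_cov N ?s F"
      unfolding inv_cov_def
    proof (intro conjI allI impI)
      fix q v2 assume a: "v2 \<in> Vs N" "part N v2 \<noteq> q" "Dt ?s q v2 \<noteq> \<infinity>"
      have "covered N s F (part N v2) v2 (Dt s q v2)"
        using I a unfolding Inv_def inv_cov_def by simp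
      then show "covered N ?s F (part N v2) v2 (Dt ?s q v2)"
        using covered_mono[of N s F "part N v2" v2 "Dt s q v2" ?s F] ge en by simp
    next
      have "covered N s F (part N (vq N)) (vq N) 0"
        using I unfolding Inv_def inv_cov_def by simp
      then show "covered N ?s F (part N (vq N)) (vq N) 0"
        using covered_mono[of N s F "part N (vq N)" "vq N" 0 ?s F] ge en by simp
    qed
  qed
qed

lemma step_finish:
  assumes wf: "wf_inst N" and I: "Inv N s F"
    and act: "active s p = Some (m, {}, {})"
  shows "Inv N (s\<lparr> active := (active s)(p := None) \<rparr>) (F(p := F p \<union> {m}))"
proof -
  let ?s = "s\<lparr> active := (active s)(p := None) \<rparr>"
  let ?F = "F(p := F p \<union> {m})"
  obtain vb d where m: "m = (vb, d)" by (cases m) auto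
  note af = act_facts[OF I act[unfolded m]]
  have ge: "geps N ?s = geps N s" by (rule geps_cong) simp
  have r: "rep ?s = rep s" unfolding rep_def by simp
  have dtq: "Dt ?s = Dt s" by simp
  have en: "entries ?s ?F q = entries s F q" for q using act by (cases "q = p") (auto simp add: entries_def)
  show ?thesis
    unfolding Inv_def
  proof (intro conjI)
    show "inv_msg N ?s" using I unfolding Inv_def inv_msg_def by simp
    show "inv_act N ?s"
      unfolding inv_act_def
    proof (intro allI impI)
      fix q vb' d' L' B' assume a: "active ?s q = Some ((vb',d'),L',B')"
      then have "q \<noteq> p" by auto
      then have h1: "active s q = Some ((vb',d'),L',B')" using a by auto
      note af2 = act_facts[OF I h1]
      show "vb' \<in> Vs N \<and> part N vb' = q \<and> SD N (vq N) vb' \<le> d' \<and> L' \<subseteq> live_set N q \<and> B' \<subseteq> ext_edges N q \<and>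
      (\<forall>vj v'. (vj,v') \<in> ext_edges N q - B' \<longrightarrow> Dt ?s q v' \<le> d' + dsub N q vb' vj + ereal (wt N vj v')) \<and>
      (\<forall>vi \<in> live_set N q - L'. Dt ?s q vi \<le> d' + dsub N q vb' vi)"
        unfolding dtq using af2(1-5) af2(6) af2(7) by blast
    qed
    show "inv_dt N ?s" using I unfolding Inv_def inv_dt_def by simp
    show "inv_reps N ?s" using I unfolding Inv_def inv_reps_def by simp
    show "inv_leps N ?s" using I unfolding Inv_def inv_leps_def ge by simp
    show "inv_pr N ?s" using I unfolding Inv_def inv_pr_def ge by simp
    show "inv_I1 N ?s ?F" using I unfolding Inv_def inv_I1_def en by simp
    show "inv_I2 N ?s ?F"
      unfolding inv_I2_def
    proof (intro allI impI)
      fix q e d' assume a: "q \<notin> pruned ?s" "(e,d') \<in> ?F q"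
      show "(\<forall>vj v'. (vj,v') \<in> ext_edges N q \<longrightarrow> Dt ?s q v' \<le> d' + dsub N q e vj + ereal (wt N vj v')) \<and>
      (\<forall>vi \<in> live_set N q. Dt ?s q vi \<le> d' + dsub N q e vi)"
      proof (cases "q = p \<and> (e, d') = m")
        case True
        then have "q = p" "e = vb" "d' = d" using m by auto
        then show ?thesis using af(6) af(7) unfolding dtq by simp
      next
        case False
        then have "(e,d') \<in> F q" using a by (cases "q = p") auto
        then show ?thesis using I a unfolding Inv_def inv_I2_def dtq by simp
      qed
    qed
    show "inv_rep N ?s"
      unfolding inv_rep_def
    proof (intro allI impI)
      fix q vi' ob assume a: "q \<notin> pruned ?s" "vi' \<in> live_set N q" "ob \<in> Obj N" "vloc N ob = vi'"
      have P: "rep s ob \<le> Dt s q vi' + ereal (rem N ob) \<or> geps N s \<le> Dt s q vi' + ereal (rem N ob) \<or>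
          (\<exists>vb d L B. active s q = Some ((vb,d),L,B) \<and> vi' \<in> L \<and> d + dsub N q vb vi' \<le> Dt s q vi')"
        using I a unfolding Inv_def inv_rep_def by simp
      have aq: "(\<exists>vb d L B. active s q = Some ((vb,d),L,B) \<and> vi' \<in> L \<and> d + dsub N q vb vi' \<le> Dt s q vi') \<Longrightarrow>
          (\<exists>vb d L B. active ?s q = Some ((vb,d),L,B) \<and> vi' \<in> L \<and> d + dsub N q vb vi' \<le> Dt s q vi')"
        using act by (cases "q = p") auto
      show "rep ?s ob \<le> Dt ?s q vi' + ereal (rem N ob) \<or> geps N ?s \<le> Dt ?s q vi' + ereal (rem N ob) \<or>
        (\<exists>vb d L B. active ?s q = Some ((vb,d),L,B) \<and> vi' \<in> L \<and> d + dsub N q vb vi' \<le> Dt ?s q vi')"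
        unfolding r ge dtq using P aq by blast
    qed
    show "inv_cov N ?s ?F"
      unfolding inv_cov_def
    proof (intro conjI allI impI)
      fix q v2 assume a: "v2 \<in> Vs N" "part N v2 \<noteq> q" "Dt ?s q v2 \<noteq> \<infinity>"
      have "covered N s F (part N v2) v2 (Dt s q v2)"
        using I a unfolding Inv_def inv_cov_def by simp
      then show "covered N ?s ?F (part N v2) v2 (Dt ?s q v2)"
        using covered_mono[of N s F "part N v2" v2 "Dt s q v2" ?s ?F] ge en by simp
    next
      have "covered N s F (part N (vq N)) (vq N) 0"
        using I unfolding Inv_def inv_cov_def by simp
      then show "covered N ?s ?F (part N (vq N)) (vq N) 0"
        using covered_mono[of N s F "part N (vq N)" "vq N" 0 ?s ?F] ge en by simp
    qed
  qed
qed

lemma step_bound: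
  assumes I: "Inv N s F" and np: "p \<notin> pruned s" and e: "e \<ge> geps N s"
  shows "Inv N (s\<lparr> leps := (leps s)(p := e) \<rparr>) F"
proof -
  let ?s = "s\<lparr> leps := (leps s)(p := e) \<rparr>"
  have ge: "geps N ?s = geps N s" by (rule geps_cong) simp
  have r: "rep ?s = rep s" unfolding rep_def by simp
  have en: "entries ?s F q = entries s F q" for q by (simp add: entries_def)
  have cv: "covered N ?s F q v x = covered N s F q v x" for q v x
    unfolding covered_def ge en by simp
  show ?thesis
    using I unfolding Inv_def inv_msg_def inv_act_def inv_dt_def inv_reps_def inv_leps_def inv_pr_def
      inv_I1_def inv_I2_def inv_rep_def inv_cov_def ge r en cv
    using e by simp
qed

lemma step_prune:
  assumes I: "Inv N s F" and np: "p \<noteq> part N (vq N)" and E: "Edist N p > geps N s"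
  shows "Inv N (s\<lparr> pruned := insert p (pruned s), leps := (leps s)(p := 0) \<rparr>) F"
proof -
  let ?s = "s\<lparr> pruned := insert p (pruned s), leps := (leps s)(p := 0) \<rparr>"
  have ge: "geps N ?s = geps N s" by (rule geps_cong) simp
  have r: "rep ?s = rep s" unfolding rep_def by simp
  have en: "entries ?s F q = entries s F q" for q by (simp add: entries_def)
  have cv: "covered N s F q v x \<Longrightarrow> covered N ?s F q v x" for q v x
    unfolding covered_def ge en by auto
  show ?thesis
    unfolding Inv_def
  proof (intro conjI)
    show "inv_msg N ?s" using I unfolding Inv_def inv_msg_def by simp
    show "inv_act N ?s" using I unfolding Inv_def inv_act_def by simp
    show "inv_dt N ?s" using I unfolding Inv_def inv_dt_def by simp
    show "inv_reps N ?s" using I unfolding Inv_def inv_reps_def by simp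
    show "inv_leps N ?s" using I unfolding Inv_def inv_leps_def ge by simp
    show "inv_pr N ?s" using I np E unfolding Inv_def inv_pr_def ge by simp
    show "inv_I1 N ?s F" using I unfolding Inv_def inv_I1_def en by simp
    show "inv_I2 N ?s F" using I unfolding Inv_def inv_I2_def by simp
    show "inv_rep N ?s" using I unfolding Inv_def inv_rep_def r ge by simp
    show "inv_cov N ?s F" using I cv unfolding Inv_def inv_cov_def by simp
  qed
qed

lemma Inv_step:
  assumes wf: "wf_inst N" and k1: "1 \<le> kq N" and I: "Inv N s F" and st: "dstep N s s'"
  shows "\<exists>F'. Inv N s' F'"
  using st
proof (cases rule: dstep.cases)
  case (discard vb d p)
  then show ?thesis using step_discard[OF wf I] by blast
next
  case (start vb d p)
  then show ?thesis using step_start[OF wf I] by blast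
next
  case (live_upd p vb d L B vi c)
  then show ?thesis using step_live_upd[OF wf k1 I] by blast
next
  case (live_skip p vb d L B vi)
  then show ?thesis using step_live_skip[OF wf I] by blast
next
  case (ext_upd p vb d L B vj v' c)
  then show ?thesis using step_ext_upd[OF wf I] by blast
next
  case (ext_skip p vb d L B vj v')
  then show ?thesis using step_ext_skip[OF wf I] by blast
next
  case (finish p m)
  then show ?thesis using step_finish[OF wf I] by blast
next
  case (bound p e)
  then show ?thesis using step_bound[OF I] by blast
next
  case (prune p)
  then show ?thesis using step_prune[OF I] by blast
qed

lemma Inv_reach:
  assumes wf: "wf_inst N" and k1: "1 \<le> kq N" and r: "reachable N s"
  shows "\<exists>F. Inv N s F"
  using r unfolding reachable_def
proof (induction rule: rtranclp_induct)
  case base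
  then show ?case using init_Inv[OF wf] by blast
next
  case (step y z)
  then show ?case using Inv_step[OF wf k1] by blast
qed

lemma objs_reach:
  assumes r: "reachable N s"
  shows "rep_objs s \<subseteq> Obj N"
  using r unfolding reachable_def rep_objs_def
proof (induction rule: rtranclp_induct)
  case base
  then show ?case by (simp add: init_state_def)
next
  case (step y z)
  from step(2) show ?case
    by (cases rule: dstep.cases) (use step(3) in auto)
qed

lemma Edist_le: "is_border N p b \<Longrightarrow> Edist N p \<le> ereal (norm (vpos N (vq N) - vpos N b))"
  unfolding Edist_def by (rule Inf_lower) blast

lemma walk_claim:
  assumes wf: "wf_inst N" and euclid: "\<forall>u v. (u, v) \<in> Es N \<longrightarrow> wt N u v \<ge> norm (vpos N u - vpos N v)"
    and I: "Inv N s F" and emp: "buffer_empty s"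
  shows "is_walk (Es N) xs \<Longrightarrow> hd xs = vq N \<Longrightarrow> set xs \<subseteq> Vs N \<Longrightarrow>
    geps N s \<le> ereal (walk_len (wt N) xs) \<or>
    (part N (last xs) \<notin> pruned s \<and>
     (\<exists>(e,d0)\<in>F (part N (last xs)). d0 + dsub N (part N (last xs)) e (last xs) \<le> ereal (walk_len (wt N) xs)))"
proof (induction xs rule: rev_induct)
  case Nil
  then show ?case by simp
next
  case (snoc y xs)
  have ib: "inbox s = {#}" and na: "\<And>p. active s p = None" using emp unfolding buffer_empty_def by auto
  have en: "entries s F p = F p" for p using na unfolding entries_def by simp
  have nn: "\<forall>u v. (u,v) \<in> Es N \<longrightarrow> 0 \<le> wt N u v" by (rule wf_nn[OF wf])
  show ?case
  proof (cases "xs = []")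
    case True
    then have y: "y = vq N" using snoc by simp
    have c: "covered N s F (part N (vq N)) (vq N) 0" using I unfolding Inv_def inv_cov_def by simp
    have np: "part N (vq N) \<notin> pruned s" using I unfolding Inv_def inv_pr_def by auto
    show ?thesis using c np ib en True y unfolding covered_def by (auto simp: zero_ereal_def)
  next
    case False
    let ?L = "walk_len (wt N) xs"
    let ?u = "last xs"
    have wxs: "is_walk (Es N) xs" and edge: "(?u, y) \<in> Es N"
      using snoc(2) is_walk_snoc[OF False] by auto
    have hxs: "hd xs = vq N" using snoc(3) False by simp
    have sxs: "set xs \<subseteq> Vs N" and yV: "y \<in> Vs N" using snoc(4) by auto
    have uV: "?u \<in> Vs N" using sxs False by auto
    have len: "walk_len (wt N) (xs @ [y]) = ?L + wt N ?u y" using walk_len_snoc[OF False] .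
    have w0: "0 \<le> wt N ?u y" using nn edge by blast
    have last_eq: "last (xs @ [y]) = y" by simp
    from snoc.IH[OF wxs hxs sxs]
    consider "geps N s \<le> ereal ?L"
      | e d0 where "part N ?u \<notin> pruned s" "(e,d0) \<in> F (part N ?u)" "d0 + dsub N (part N ?u) e ?u \<le> ereal ?L"
      by blast
    then show ?thesis
    proof cases
      case 1
      then have "geps N s \<le> ereal (?L + wt N ?u y)" using w0 by (auto intro: order_trans)
      then show ?thesis using len by simp
    next
      case 2
      let ?p = "part N ?u"
      have uSG: "?u \<in> SG N ?p" using uV unfolding SG_def by simp
      have bnd: "d0 + dsub N ?p e ?u + ereal (wt N ?u y) \<le> ereal (?L + wt N ?u y)"
        using add_right_mono[OF 2(3), of "ereal (wt N ?u y)"] by simp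
      show ?thesis
      proof (cases "part N y = ?p")
        case True
        have ySG: "y \<in> SG N ?p" using yV True unfolding SG_def by simp
        have "dsub N ?p e y \<le> dsub N ?p e ?u + ereal (wt N ?u y)"
          by (rule dsub_tri_edge[OF wf edge uSG ySG])
        then have "d0 + dsub N ?p e y \<le> d0 + dsub N ?p e ?u + ereal (wt N ?u y)"
          using add_left_mono by (metis add.assoc)
        then have "d0 + dsub N ?p e y \<le> ereal (walk_len (wt N) (xs @ [y]))"
          using bnd len by (metis order_trans)
        then show ?thesis using 2 True by auto
      next
        case False
        let ?q = "part N y"
        have ee: "(?u, y) \<in> ext_edges N ?p"
          unfolding ext_edges_def is_border_def using uSG edge yV False by auto
        have "Dt s ?p y \<le> d0 + dsub N ?p e ?u + ereal (wt N ?u y)"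
          using I 2(1,2) ee unfolding Inv_def inv_I2_def by blast
        then have dtL: "Dt s ?p y \<le> ereal (walk_len (wt N) (xs @ [y]))" using bnd len by (metis order_trans)
        then have "Dt s ?p y \<noteq> \<infinity>" by auto
        then have cov: "covered N s F ?q y (Dt s ?p y)"
          using I yV False unfolding Inv_def inv_cov_def by auto
        show ?thesis
        proof (cases "?q \<in> pruned s")
          case True
          then have "geps N s < Edist N ?q" using I unfolding Inv_def inv_pr_def by blast
          moreover have "is_border N ?q y"
          proof -
            have "(y, ?u) \<in> Es N" using edge wf unfolding wf_inst_def by blast
            then show ?thesis unfolding is_border_def SG_def using yV uV False by auto
          qed
          then have "Edist N ?q \<le> ereal (norm (vpos N (vq N) - vpos N y))" by (rule Edist_le)
          moreover have "norm (vpos N (hd (xs @ [y])) - vpos N (last (xs @ [y]))) \<le> walk_len (wt N) (xs @ [y])"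
            by (rule walk_euclid[OF snoc(2) euclid])
          then have "norm (vpos N (vq N) - vpos N y) \<le> walk_len (wt N) (xs @ [y])"
            using snoc(3) by simp
          ultimately have "geps N s \<le> ereal (walk_len (wt N) (xs @ [y]))"
            by (meson ereal_less_eq(3) less_imp_le order_trans)
          then show ?thesis by simp
        next
          case np: False
          from cov np ib en
          consider "geps N s \<le> Dt s ?p y" | e' d' where "(e',d') \<in> F ?q" "d' + dsub N ?q e' y \<le> Dt s ?p y"
            unfolding covered_def by auto
          then show ?thesis
          proof cases
            case 1 then show ?thesis using dtL by (auto intro: order_trans)
          next
            case 2
            then have "d' + dsub N ?q e' y \<le> ereal (walk_len (wt N) (xs @ [y]))" using dtL by (metis order_trans)
            then show ?thesis using 2 np by auto
          qed
        qed
      qed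
    qed
  qed
qed

lemma SD_walks: "SD N a b = (INF xs\<in>{xs. is_walk (Es N) xs \<and> hd xs = a \<and> last xs = b \<and> set xs \<subseteq> Vs N}. ereal (walk_len (wt N) xs))"
  unfolding SD_def sp_dist_def by (rule arg_cong[where f=Inf]) blast

lemma main_claim:
  assumes wf: "wf_inst N" and euclid: "\<forall>u v. (u, v) \<in> Es N \<longrightarrow> wt N u v \<ge> norm (vpos N u - vpos N v)"
    and I: "Inv N s F" and emp: "buffer_empty s" and ob: "ob \<in> Obj N"
  shows "min (rep s ob) (geps N s) \<le> SD_obj N ob"
proof -
  let ?v = "vloc N ob"
  let ?W = "{xs. is_walk (Es N) xs \<and> hd xs = vq N \<and> last xs = ?v \<and> set xs \<subseteq> Vs N}"
  have na: "\<And>p. active s p = None" using emp unfolding buffer_empty_def by auto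
  have vV: "?v \<in> Vs N" and r0: "0 \<le> rem N ob" using wf ob unfolding wf_inst_def by auto
  have nn: "\<forall>u v. (u,v) \<in> Es N \<longrightarrow> 0 \<le> wt N u v" by (rule wf_nn[OF wf])
  have each: "min (rep s ob) (geps N s) \<le> ereal (walk_len (wt N) xs) + ereal (rem N ob)" if xs: "xs \<in> ?W" for xs
  proof -
    have L0: "ereal (walk_len (wt N) xs) \<le> ereal (walk_len (wt N) xs) + ereal (rem N ob)" using r0 by simp
    from xs have xs': "is_walk (Es N) xs" "hd xs = vq N" "last xs = ?v" "set xs \<subseteq> Vs N" by auto
    have wc: "geps N s \<le> ereal (walk_len (wt N) xs) \<or>
    (part N (last xs) \<notin> pruned s \<and>
     (\<exists>(e,d0)\<in>F (part N (last xs)). d0 + dsub N (part N (last xs)) e (last xs) \<le> ereal (walk_len (wt N) xs)))"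
      by (rule walk_claim[OF wf euclid I emp xs'(1,2,4)])
    from wc[unfolded xs'(3)]
    consider "geps N s \<le> ereal (walk_len (wt N) xs)"
      | e d0 where "part N ?v \<notin> pruned s" "(e,d0) \<in> F (part N ?v)" "d0 + dsub N (part N ?v) e ?v \<le> ereal (walk_len (wt N) xs)"
      by auto
    then show ?thesis
    proof cases
      case 1
      have "min (rep s ob) (geps N s) \<le> geps N s" by simp
      then show ?thesis using order_trans[OF 1 L0] by (rule order_trans)
    next
      case 2
      let ?p = "part N ?v"
      have live: "?v \<in> live_set N ?p" using vV ob unfolding live_set_def SG_def by auto
      have "Dt s ?p ?v \<le> d0 + dsub N ?p e ?v" using I 2(1,2) live unfolding Inv_def inv_I2_def by blast
      then have "Dt s ?p ?v \<le> ereal (walk_len (wt N) xs)" using 2(3) by (rule order_trans)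
      then have dtL: "Dt s ?p ?v + ereal (rem N ob) \<le> ereal (walk_len (wt N) xs) + ereal (rem N ob)"
        by (rule add_right_mono)
      have "rep s ob \<le> Dt s ?p ?v + ereal (rem N ob) \<or> geps N s \<le> Dt s ?p ?v + ereal (rem N ob)"
        using I 2(1) live ob na unfolding Inv_def inv_rep_def by auto
      then show ?thesis
      proof
        assume "rep s ob \<le> Dt s ?p ?v + ereal (rem N ob)"
        then have "rep s ob \<le> ereal (walk_len (wt N) xs) + ereal (rem N ob)" using dtL by (rule order_trans)
        then show ?thesis by (rule min.coboundedI1)
      next
        assume "geps N s \<le> Dt s ?p ?v + ereal (rem N ob)"
        then have "geps N s \<le> ereal (walk_len (wt N) xs) + ereal (rem N ob)" using dtL by (rule order_trans)
        then show ?thesis by (rule min.coboundedI2)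
      qed
    qed
  qed
  show ?thesis
  proof (cases "?W = {}")
    case True
    then have "SD N (vq N) ?v = \<infinity>" unfolding SD_walks True by (simp add: top_ereal_def)
    then show ?thesis unfolding SD_obj_def by simp
  next
    case False
    have "SD_obj N ob = (INF xs\<in>?W. ereal (walk_len (wt N) xs)) + ereal (rem N ob)"
      unfolding SD_obj_def SD_walks ..
    also have "\<dots> = (INF xs\<in>?W. ereal (walk_len (wt N) xs) + ereal (rem N ob))"
      by (rule INF_ereal_add_left[symmetric]) (use False nn in \<open>auto intro: walk_len_nonneg\<close>)
    finally show ?thesis using each by (auto intro!: INF_greatest)
  qed
qed

theorem theorem2:
  fixes N :: "('v, 'p, 'o) dknn_inst" and s :: "('v, 'p, 'o) dstate" and R :: "'o set"
  assumes wf: "wf_inst N"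
    and conn: "connected_graph N"
    and euclid: "\<forall>u v. (u, v) \<in> Es N \<longrightarrow> wt N u v \<ge> norm (vpos N u - vpos N v)"
    and many: "card (Obj N) > kq N"
    and run: "reachable N s"
    and empty: "buffer_empty s"
    and res: "is_result N s R"
  shows "card R = kq N \<and> R \<subseteq> Obj N \<and>
         (\<forall>ob \<in> R. \<forall>ob' \<in> Obj N - R. SD_obj N ob \<le> SD_obj N ob')"
proof -
  have RO: "rep_objs s \<subseteq> Obj N" by (rule objs_reach[OF run])
  have finO: "finite (Obj N)" using wf unfolding wf_inst_def by simp
  have finR: "finite (rep_objs s)" using RO finO finite_subset by blast
  have Rsub: "R \<subseteq> rep_objs s" and cR: "card R = min (kq N) (card (rep_objs s))"
    and Rord: "\<forall>ob \<in> R. \<forall>o' \<in> rep_objs s - R. rep s ob \<le> rep s o'"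
    using res unfolding is_result_def by auto
  have finRR: "finite R" using Rsub finR finite_subset by blast
  show ?thesis
  proof (cases "kq N = 0")
    case True
    then have "R = {}" using cR finRR by simp
    then show ?thesis using True by simp
  next
    case False
    then have k1: "1 \<le> kq N" by simp
    obtain F where I: "Inv N s F" using Inv_reach[OF wf k1 run] by blast
    have mc: "min (rep s ob) (geps N s) \<le> SD_obj N ob" if "ob \<in> Obj N" for ob
      by (rule main_claim[OF wf euclid I empty that])
    have sound: "SD_obj N ob \<le> rep s ob" for ob
      using I unfolding Inv_def inv_reps_def rep_def by (auto intro: Inf_greatest)
    have repinf: "rep s ob = \<infinity>" if "ob \<notin> rep_objs s" for ob
    proof -
      have "{d. (ob, d) \<in> reps s} = {}" using that unfolding rep_objs_def by force
      then show ?thesis unfolding rep_def by (simp add: top_ereal_def)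
    qed
    have cardk: "kq N \<le> card (rep_objs s)"
    proof (rule ccontr)
      assume "\<not> kq N \<le> card (rep_objs s)"
      then have g: "geps N s = \<infinity>" unfolding geps_def by simp
      have "Obj N \<subseteq> rep_objs s"
      proof
        fix ob assume ob: "ob \<in> Obj N"
        have vV: "vloc N ob \<in> Vs N" and qV: "vq N \<in> Vs N" using wf ob unfolding wf_inst_def by auto
        obtain xs where xs: "is_walk (Es N) xs" "hd xs = vq N" "last xs = vloc N ob" "set xs \<subseteq> Vs N"
          using conn vV qV unfolding connected_graph_def by blast
        have "SD N (vq N) (vloc N ob) \<le> ereal (walk_len (wt N) xs)"
          unfolding SD_def by (rule sp_le_walk[OF xs])
        then have "SD_obj N ob < \<infinity>" unfolding SD_obj_def by auto
        moreover have "rep s ob \<le> SD_obj N ob" using mc[OF ob] g by simp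
        ultimately have "rep s ob \<noteq> \<infinity>" by auto
        then show "ob \<in> rep_objs s" using repinf by blast
      qed
      then have "card (Obj N) \<le> card (rep_objs s)" by (rule card_mono[OF finR])
      then show False using many \<open>\<not> kq N \<le> card (rep_objs s)\<close> by simp
    qed
    have cardR: "card R = kq N" using cR cardk by simp
    have repg: "rep s ob \<le> geps N s" if obR: "ob \<in> R" for ob
    proof (rule ccontr)
      assume "\<not> rep s ob \<le> geps N s"
      then have lt: "geps N s < rep s ob" by simp
      have "kq N \<le> card {o'\<in>rep_objs s. rep s o' \<le> geps N s}"
        by (rule geps_upper[OF finR k1 cardk])
      also have "\<dots> \<le> card (R - {ob})"
      proof (rule card_mono)
        show "finite (R - {ob})" using finRR by simp
        show "{o'\<in>rep_objs s. rep s o' \<le> geps N s} \<subseteq> R - {ob}"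
        proof
          fix o' assume o': "o' \<in> {o'\<in>rep_objs s. rep s o' \<le> geps N s}"
          have "o' \<in> R"
          proof (rule ccontr)
            assume "o' \<notin> R"
            then have "rep s ob \<le> rep s o'" using Rord obR o' by blast
            moreover have "rep s o' \<le> geps N s" using o' by simp
            ultimately have "rep s ob \<le> geps N s" by (rule order_trans)
            then show False using lt by simp
          qed
          moreover have "o' \<noteq> ob"
          proof
            assume "o' = ob"
            then have "rep s ob \<le> geps N s" using o' by simp
            then show False using lt by simp
          qed
          ultimately show "o' \<in> R - {ob}" by simp
        qed
      qed
      also have "\<dots> = kq N - 1" using finRR obR cardR by simp
      finally show False using k1 by simp
    qed
    have ord: "SD_obj N ob \<le> SD_obj N ob'" if obR: "ob \<in> R" and ob': "ob' \<in> Obj N - R" for ob ob'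
    proof -
      have "rep s ob \<le> rep s ob'"
      proof (cases "ob' \<in> rep_objs s")
        case True
        then show ?thesis using Rord obR ob' by blast
      next
        case False
        then show ?thesis using repinf[OF False] by simp
      qed
      then have "rep s ob \<le> min (rep s ob') (geps N s)" using repg[OF obR] by simp
      also have "\<dots> \<le> SD_obj N ob'" using mc ob' by simp
      finally show ?thesis by (rule order_trans[OF sound])
    qed
    have ord2: "\<forall>ob \<in> R. \<forall>ob' \<in> Obj N - R. SD_obj N ob \<le> SD_obj N ob'" using ord by blast
    have "R \<subseteq> Obj N" using Rsub RO by (rule subset_trans)
    then show ?thesis using cardR ord2 by simp
  qed
qed

end
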